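(* Let $C(\mathscr{H}_{\mathbb{A}}^{13})=\mathscr{H}_{\mathbb{A}}^{13}\times\mathbb{A}^1_v\subset\operatorname{Spec}S_{\mathscr{H}}[v]$ be the cone over $\mathscr{H}_{\mathbb{A}}^{13}$ with one extra coordinate $v$. Then both $C(\mathscr{H}_{\mathbb{A}}^{13})\cap\{v=u_1=0\}$ and $C(\mathscr{H}_{\mathbb{A}}^{13})\cap\{\bm{x}_1=\bm{0}\}$ have codimension at least $2$ in $C(\mathscr{H}_{\mathbb{A}}^{13})$.
   Context: Work over $\mathbb{C}$. $S_{\mathscr{H}}$ is the polynomial ring in $u_1,u_2,u_3$, $x_{ij}$ ($i\in\{1,2\},j\in\{1,2,3\}$), $p_{abc}$ ($a,b,c\in\{1,2\}$), and $\mathscr{H}_{\mathbb{A}}^{13}\subset\operatorname{Spec}S_{\mathscr{H}}$ is defined by $-u_1\bm{x}_1+D^{(3)}\bm{x}_2=\bm{0}$, $-u_2\bm{x}_2+D^{(1)}\bm{x}_3=\bm{0}$, $-u_3\bm{x}_3-(D^{(2)})^{\dagger}\bm{x}_1=\bm{0}$, $u_2u_3+\det D^{(1)}=0$, $u_3u_1+\det D^{(2)}=0$, $u_1u_2+\det D^{(3)}=0$, where $\bm{x}_j=(x_{1j},x_{2j})^t$, $M^\dagger$ is the adjugate, $D^{(1)}_{ij}=p_{1ij}x_{21}-p_{2ij}x_{11}$, $D^{(2)}_{ij}=p_{i1j}x_{22}-p_{i2j}x_{12}$, $D^{(3)}_{ij}=p_{ij1}x_{23}-p_{ij2}x_{13}$,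 $D^{(k)}$ has rows $(-D^{(k)}_{12},D^{(k)}_{11})$, $(-D^{(k)}_{22},D^{(k)}_{21})$. $C(\mathscr{H}_{\mathbb{A}}^{13})$ is the subscheme of $\operatorname{Spec}S_{\mathscr{H}}[v]$ defined by the same equations. *)

theory Defs
  imports Main "HOL-Library.Extended_Nat"
begin

datatype idx2 = I1 | I2
datatype idx3 = J1 | J2 | J3

text \<open>The 18 coordinates u_k, x_ij, p_abc, v (constructors Uc, Xc, Pc, Vc).  A closed point of Spec S_H[v] over C is a map var => complex.\<close>
datatype var = Uc idx3 | Xc idx2 idx3 | Pc idx2 idx2 idx2 | Vc

type_synonym pt = "var \<Rightarrow> complex"

inductive_set poly_fun :: "(pt \<Rightarrow> complex) set" where
  pf_const: "(\<lambda>a. c) \<in> poly_fun"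
| pf_coord: "(\<lambda>a. a i) \<in> poly_fun"
| pf_add: "f \<in> poly_fun \<Longrightarrow> g \<in> poly_fun \<Longrightarrow> (\<lambda>a. f a + g a) \<in> poly_fun"
| pf_mult: "f \<in> poly_fun \<Longrightarrow> g \<in> poly_fun \<Longrightarrow> (\<lambda>a. f a * g a) \<in> poly_fun"

definition zariski_closed :: "pt set \<Rightarrow> bool" where
  "zariski_closed S \<longleftrightarrow> (\<exists>F \<subseteq> poly_fun. S = {a. \<forall>f\<in>F. f a = 0})"

definition irred_closed :: "pt set \<Rightarrow> bool" where
  "irred_closed Y \<longleftrightarrow> Y \<noteq> {} \<and> zariski_closed Y \<and>
     (\<forall>A B. zariski_closed A \<and> zariski_closed B \<and> Y \<subseteq> A \<union> B \<longrightarrow> Y \<subseteq> A \<or> Y \<subseteq> B)"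

definition codim_irr :: "pt set \<Rightarrow> pt set \<Rightarrow> enat" where
  "codim_irr X Y = Sup {enat n | n. \<exists>c :: nat \<Rightarrow> pt set. c 0 = Y \<and>
      (\<forall>i<n. c i \<subset> c (Suc i)) \<and> (\<forall>i\<le>n. irred_closed (c i) \<and> c i \<subseteq> X)}"

text \<open>Codimension of a closed subset Z of X: infimum over irreducible closed Y contained in Z
  (infinity if Z is empty).\<close>
definition codim :: "pt set \<Rightarrow> pt set \<Rightarrow> enat" where
  "codim X Z = Inf {codim_irr X Y | Y. irred_closed Y \<and> Y \<subseteq> Z}"

definition Dent :: "idx3 \<Rightarrow> pt \<Rightarrow> idx2 \<Rightarrow> idx2 \<Rightarrow> complex" where
  "Dent k a i j = (case k of
      J1 \<Rightarrow> a (Pc I1 i j) * a (Xc I2 J1) - a (Pc I2 i j) * a (Xc I1 J1)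
    | J2 \<Rightarrow> a (Pc i I1 j) * a (Xc I2 J2) - a (Pc i I2 j) * a (Xc I1 J2)
    | J3 \<Rightarrow> a (Pc i j I1) * a (Xc I2 J3) - a (Pc i j I2) * a (Xc I1 J3))"

definition Dmat :: "idx3 \<Rightarrow> pt \<Rightarrow> idx2 \<Rightarrow> idx2 \<Rightarrow> complex" where
  "Dmat k a r s = (case s of I1 \<Rightarrow> - Dent k a r I2 | I2 \<Rightarrow> Dent k a r I1)"

definition adj2 :: "(idx2 \<Rightarrow> idx2 \<Rightarrow> complex) \<Rightarrow> idx2 \<Rightarrow> idx2 \<Rightarrow> complex" where
  "adj2 M r s = (case (r, s) of
      (I1, I1) \<Rightarrow> M I2 I2 | (I1, I2) \<Rightarrow> - M I1 I2
    | (I2, I1) \<Rightarrow> - M I2 I1 | (I2, I2) \<Rightarrow> M I1 I1)"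

definition det2 :: "(idx2 \<Rightarrow> idx2 \<Rightarrow> complex) \<Rightarrow> complex" where
  "det2 M = M I1 I1 * M I2 I2 - M I1 I2 * M I2 I1"

definition mv :: "(idx2 \<Rightarrow> idx2 \<Rightarrow> complex) \<Rightarrow> (idx2 \<Rightarrow> complex) \<Rightarrow> idx2 \<Rightarrow> complex" where
  "mv M x r = M r I1 * x I1 + M r I2 * x I2"

definition xvec :: "pt \<Rightarrow> idx3 \<Rightarrow> idx2 \<Rightarrow> complex" where
  "xvec a j i = a (Xc i j)"

definition H_eqs :: "pt \<Rightarrow> bool" where
  "H_eqs a \<longleftrightarrow>
     (\<forall>r. - a (Uc J1) * xvec a J1 r + mv (Dmat J3 a) (xvec a J2) r = 0) \<and>
     (\<forall>r. - a (Uc J2) * xvec a J2 r + mv (Dmat J1 a) (xvec a J3) r = 0) \<and>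
     (\<forall>r. - a (Uc J3) * xvec a J3 r - mv (adj2 (Dmat J2 a)) (xvec a J1) r = 0) \<and>
     a (Uc J2) * a (Uc J3) + det2 (Dmat J1 a) = 0 \<and>
     a (Uc J3) * a (Uc J1) + det2 (Dmat J2 a) = 0 \<and>
     a (Uc J1) * a (Uc J2) + det2 (Dmat J3 a) = 0"

text \<open>C(H^13_A) in Spec S_H[v]: same equations, v unconstrained.\<close>
definition coneH :: "pt set" where
  "coneH = {a. H_eqs a}"

end

theory Submission
  imports Defs "HOL-Computational_Algebra.Polynomial"
begin


inductive_set gpoly :: "(('i \<Rightarrow> complex) \<Rightarrow> complex) set" where
  gp_const: "(\<lambda>a. c) \<in> gpoly"
| gp_coord: "(\<lambda>a. a i) \<in> gpoly"
| gp_add: "f \<in> gpoly \<Longrightarrow> g \<in> gpoly \<Longrightarrow> (\<lambda>a. f a + g a) \<in> gpoly"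
| gp_mult: "f \<in> gpoly \<Longrightarrow> g \<in> gpoly \<Longrightarrow> (\<lambda>a. f a * g a) \<in> gpoly"

lemma gp_diff: "f \<in> gpoly \<Longrightarrow> g \<in> gpoly \<Longrightarrow> (\<lambda>a. f a - g a) \<in> gpoly"
proof -
  assume f: "f \<in> gpoly" and g: "g \<in> gpoly"
  have "(\<lambda>a. (-1) * g a) \<in> gpoly" by (rule gp_mult[OF gp_const g])
  from gp_add[OF f this] show ?thesis by simp
qed

lemma gp_neg: "f \<in> gpoly \<Longrightarrow> (\<lambda>a. - f a) \<in> gpoly"
  using gp_diff[OF gp_const, of f 0] by simp

lemma poly_fun_gpoly: "f \<in> poly_fun \<Longrightarrow> f \<in> gpoly"
  by (induction rule: poly_fun.induct) (auto intro: gpoly.intros)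

lemma gpoly_poly_fun: "f \<in> gpoly \<Longrightarrow> f \<in> poly_fun"
  by (induction rule: gpoly.induct) (auto intro: poly_fun.intros)

definition upoly :: "(complex \<Rightarrow> complex) \<Rightarrow> bool" where
  "upoly h \<longleftrightarrow> (\<exists>p. \<forall>t. h t = poly p t)"

lemma upoly_const[intro]: "upoly (\<lambda>t. c)"
  unfolding upoly_def by (rule exI[of _ "[:c:]"]) simp
lemma upoly_id[intro]: "upoly (\<lambda>t. t)"
  unfolding upoly_def by (rule exI[of _ "[:0,1:]"]) simp
lemma upoly_add[intro]: "upoly f \<Longrightarrow> upoly g \<Longrightarrow> upoly (\<lambda>t. f t + g t)"
  unfolding upoly_def by (metis poly_add)
lemma upoly_mult[intro]: "upoly f \<Longrightarrow> upoly g \<Longrightarrow> upoly (\<lambda>t. f t * g t)"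
  unfolding upoly_def by (metis poly_mult)
lemma upoly_diff[intro]: "upoly f \<Longrightarrow> upoly g \<Longrightarrow> upoly (\<lambda>t. f t - g t)"
  unfolding upoly_def by (metis poly_diff)
lemma upoly_neg[intro]: "upoly f \<Longrightarrow> upoly (\<lambda>t. - f t)"
  unfolding upoly_def by (metis poly_minus)
lemma upoly_pow[intro]: "upoly f \<Longrightarrow> upoly (\<lambda>t. f t ^ n)"
  by (induction n) auto

lemma gpoly_upoly: "f \<in> gpoly \<Longrightarrow> (\<And>i. upoly (\<lambda>t. \<gamma> t i)) \<Longrightarrow> upoly (\<lambda>t. f (\<gamma> t))"
  by (induction rule: gpoly.induct) auto

lemma upoly_domain:
  assumes "upoly f" "upoly g" "\<And>t. f t * g t = 0"
  shows "(\<forall>t. f t = 0) \<or> (\<forall>t. g t = 0)"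
proof -
  obtain p q where p: "\<And>t. f t = poly p t" and q: "\<And>t. g t = poly q t"
    using assms(1,2) unfolding upoly_def by blast
  have "\<forall>t. poly (p * q) t = 0" using assms(3) p q by simp
  then have "poly (p*q) = poly 0" by auto
  then have "p * q = 0" using poly_eq_poly_eq_iff by blast
  then have "p = 0 \<or> q = 0" by simp
  then show ?thesis using p q by auto
qed

lemma upoly_zero:
  assumes "upoly h" "\<And>t. t \<noteq> 0 \<Longrightarrow> h t = 0"
  shows "h t = 0"
proof -
  obtain p where p: "\<And>t. h t = poly p t" using assms(1) unfolding upoly_def by blast
  have "p = 0"
  proof (rule ccontr)
    assume "p \<noteq> 0"
    then have "finite {t. poly p t = 0}" by (rule poly_roots_finite)
    moreover have "UNIV - {0} \<subseteq> {t. poly p t = 0}" using assms(2) p by auto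
    moreover have "infinite (UNIV - {0::complex})"
      by (rule Diff_infinite_finite) (auto simp: infinite_UNIV_char_0)
    ultimately show False using finite_subset by blast
  qed
  then show ?thesis using p by simp
qed

lemma gpoly_domain:
  assumes f: "f \<in> gpoly" and g: "g \<in> gpoly" and fg: "\<And>x. f x * g x = 0"
  shows "(\<forall>x. f x = 0) \<or> (\<forall>x. g x = 0)"
proof (rule ccontr)
  assume "\<not> ?thesis"
  then obtain a b where a: "f a \<noteq> 0" and b: "g b \<noteq> 0" by auto
  define \<gamma> where "\<gamma> = (\<lambda>t i. a i + t * (b i - a i))"
  have u: "\<And>i. upoly (\<lambda>t. \<gamma> t i)" unfolding \<gamma>_def by (intro upoly_add upoly_mult upoly_const upoly_id)
  have "(\<forall>t. f (\<gamma> t) = 0) \<or> (\<forall>t. g (\<gamma> t) = 0)"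
    by (rule upoly_domain[OF gpoly_upoly[OF f u] gpoly_upoly[OF g u]]) (rule fg)
  moreover have "\<gamma> 0 = a" "\<gamma> 1 = b" unfolding \<gamma>_def by auto
  ultimately show False using a b by metis
qed

lemma gpoly_comp:
  assumes "f \<in> gpoly" "\<And>w. (\<lambda>x. \<Phi> x w) \<in> gpoly"
  shows "(\<lambda>x. f (\<Phi> x)) \<in> gpoly"
  using assms by (induction rule: gpoly.induct) (auto intro: gpoly.intros)

definition zcl :: "pt set \<Rightarrow> pt set" where
  "zcl S = {a. \<forall>f\<in>poly_fun. (\<forall>s\<in>S. f s = 0) \<longrightarrow> f a = 0}"

lemma zcl_closed: "zariski_closed (zcl S)"
  unfolding zariski_closed_def zcl_def
  by (rule exI[of _ "{f\<in>poly_fun. \<forall>s\<in>S. f s = 0}"]) auto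

lemma zcl_sub: "S \<subseteq> zcl S"
  unfolding zcl_def by auto

lemma zcl_min: "zariski_closed A \<Longrightarrow> S \<subseteq> A \<Longrightarrow> zcl S \<subseteq> A"
  unfolding zariski_closed_def zcl_def by blast

lemma zcl_mono: "S \<subseteq> T \<Longrightarrow> zcl S \<subseteq> zcl T"
  by (meson order_trans zcl_closed zcl_min zcl_sub)

lemma zcl_trans: "b \<in> zcl S \<Longrightarrow> S \<subseteq> zcl T \<Longrightarrow> b \<in> zcl T"
  using zcl_min[OF zcl_closed] by blast

lemma closed_zero: "zariski_closed A \<Longrightarrow> \<exists>F\<subseteq>poly_fun. A = {a. \<forall>f\<in>F. f a = 0}"
  unfolding zariski_closed_def by blast

lemma irred_image:
  fixes \<Phi> :: "('i \<Rightarrow> complex) \<Rightarrow> pt"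
  assumes P: "\<And>w. (\<lambda>x. \<Phi> x w) \<in> gpoly"
  shows "irred_closed (zcl (range \<Phi>))"
  unfolding irred_closed_def
proof (intro conjI allI impI)
  show "zcl (range \<Phi>) \<noteq> {}" using zcl_sub[of "range \<Phi>"] by auto
  show "zariski_closed (zcl (range \<Phi>))" by (rule zcl_closed)
  fix A B assume AB: "zariski_closed A \<and> zariski_closed B \<and> zcl (range \<Phi>) \<subseteq> A \<union> B"
  show "zcl (range \<Phi>) \<subseteq> A \<or> zcl (range \<Phi>) \<subseteq> B"
  proof (rule ccontr)
    assume "\<not> ?thesis"
    then have n1: "\<not> zcl (range \<Phi>) \<subseteq> A" and n2: "\<not> zcl (range \<Phi>) \<subseteq> B" by simp_all
    have nA: "\<not> range \<Phi> \<subseteq> A"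
    proof
      assume "range \<Phi> \<subseteq> A"
      from zcl_min[OF _ this] AB n1 show False by simp
    qed
    have nB: "\<not> range \<Phi> \<subseteq> B"
    proof
      assume "range \<Phi> \<subseteq> B"
      from zcl_min[OF _ this] AB n2 show False by simp
    qed
    have cA0: "zariski_closed A" using AB by simp
    obtain FA where FA: "FA \<subseteq> poly_fun" "A = {a. \<forall>f\<in>FA. f a = 0}" using closed_zero[OF cA0] by blast
    have cB0: "zariski_closed B" using AB by simp
    obtain FB where FB: "FB \<subseteq> poly_fun" "B = {a. \<forall>f\<in>FB. f a = 0}" using closed_zero[OF cB0] by blast
    obtain x0 f where f: "f \<in> FA" "f (\<Phi> x0) \<noteq> 0" using nA FA by auto
    obtain x1 g where g: "g \<in> FB" "g (\<Phi> x1) \<noteq> 0" using nB FB by auto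
    have fg: "f (\<Phi> x) * g (\<Phi> x) = 0" for x
    proof -
      have "\<Phi> x \<in> A \<union> B" using AB zcl_sub by blast
      then show ?thesis using f g FA FB by auto
    qed
    have "f \<in> gpoly" "g \<in> gpoly" using f g FA FB poly_fun_gpoly by auto
    then have "(\<lambda>x. f (\<Phi> x)) \<in> gpoly" "(\<lambda>x. g (\<Phi> x)) \<in> gpoly"
      using gpoly_comp[of f \<Phi>] gpoly_comp[of g \<Phi>] P by auto
    then have "(\<forall>x. f (\<Phi> x) = 0) \<or> (\<forall>x. g (\<Phi> x) = 0)" by (rule gpoly_domain) (rule fg)
    then show False using f(2) g(2) by blast
  qed
qed

lemma curve_cl:
  assumes "\<And>w. upoly (\<lambda>t. \<gamma> t w)" "\<And>t. t \<noteq> 0 \<Longrightarrow> \<gamma> t \<in> S"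
  shows "\<gamma> 0 \<in> zcl S"
  unfolding zcl_def
proof (intro CollectI ballI impI)
  fix f :: "pt \<Rightarrow> complex" assume f: "f \<in> poly_fun" and z: "\<forall>s\<in>S. f s = 0"
  have "upoly (\<lambda>t. f (\<gamma> t))" by (rule gpoly_upoly[OF poly_fun_gpoly[OF f]]) (rule assms(1))
  then show "f (\<gamma> 0) = 0" by (rule upoly_zero) (use z assms(2) in auto)
qed

definition vext :: "pt set \<Rightarrow> pt set" where
  "vext Y = {a. a(Vc := 0) \<in> Y}"

lemma comp_closed:
  assumes "zariski_closed A" "\<And>w. (\<lambda>x. \<Phi> x w) \<in> poly_fun"
  shows "zariski_closed {x. \<Phi> x \<in> A}"
proof -
  obtain F where F: "F \<subseteq> poly_fun" "A = {a. \<forall>f\<in>F. f a = 0}" using assms(1) closed_zero by blast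
  have "(\<lambda>x. f (\<Phi> x)) \<in> poly_fun" if "f \<in> F" for f
  proof -
    have "f \<in> gpoly" using that F poly_fun_gpoly by auto
    moreover have "\<And>w. (\<lambda>x. \<Phi> x w) \<in> gpoly" using assms(2) poly_fun_gpoly by auto
    ultimately have "(\<lambda>x. f (\<Phi> x)) \<in> gpoly" by (rule gpoly_comp)
    then show ?thesis by (rule gpoly_poly_fun)
  qed
  then have "(\<lambda>f x. f (\<Phi> x)) ` F \<subseteq> poly_fun" by auto
  moreover have "{x. \<Phi> x \<in> A} = {x. \<forall>h\<in>(\<lambda>f x. f (\<Phi> x)) ` F. h x = 0}" using F by auto
  ultimately show ?thesis unfolding zariski_closed_def by blast
qed

lemma upd_poly: "(\<lambda>x. (x(Vc := c)) w) \<in> poly_fun"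
  by (cases "w = Vc") (auto intro: poly_fun.intros)

lemma irredD:
  assumes "irred_closed Y"
  shows "Y \<noteq> {}" "zariski_closed Y"
    "\<And>A B. zariski_closed A \<Longrightarrow> zariski_closed B \<Longrightarrow> Y \<subseteq> A \<union> B \<Longrightarrow> Y \<subseteq> A \<or> Y \<subseteq> B"
  using assms unfolding irred_closed_def by simp_all

lemma vext_irred:
  assumes Y: "irred_closed Y" and v0: "\<And>y. y \<in> Y \<Longrightarrow> y Vc = 0"
  shows "irred_closed (vext Y)"
  unfolding irred_closed_def
proof (intro conjI allI impI)
  obtain y where y: "y \<in> Y" using irredD(1)[OF Y] by auto
  have "y(Vc := 0) = y" using v0[OF y] by auto
  then have "y \<in> vext Y" using y unfolding vext_def by simp
  then show "vext Y \<noteq> {}" by auto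
  have "zariski_closed {x. x(Vc := 0) \<in> Y}"
    by (rule comp_closed[OF irredD(2)[OF Y]]) (rule upd_poly)
  then show "zariski_closed (vext Y)" unfolding vext_def .
  fix A B assume AB: "zariski_closed A \<and> zariski_closed B \<and> vext Y \<subseteq> A \<union> B"
  have cA0: "zariski_closed A" and cB0: "zariski_closed B" and sub: "vext Y \<subseteq> A \<union> B"
    using AB by simp_all
  show "vext Y \<subseteq> A \<or> vext Y \<subseteq> B"
  proof (rule ccontr)
    assume nAB: "\<not> ?thesis"
    obtain FA where FA: "FA \<subseteq> poly_fun" "A = {a. \<forall>f\<in>FA. f a = 0}" using closed_zero[OF cA0] by blast
    obtain FB where FB: "FB \<subseteq> poly_fun" "B = {a. \<forall>f\<in>FB. f a = 0}" using closed_zero[OF cB0] by blast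
    obtain a0 where a0: "a0 \<in> vext Y" "a0 \<notin> A" using nAB by auto
    obtain f where f: "f \<in> FA" "f a0 \<noteq> 0" using a0(2) FA(2) by auto
    obtain a1 where a1: "a1 \<in> vext Y" "a1 \<notin> B" using nAB by auto
    obtain g where g: "g \<in> FB" "g a1 \<noteq> 0" using a1(2) FB(2) by auto
    define y0 where "y0 = a0(Vc := 0)"
    define y1 where "y1 = a1(Vc := 0)"
    have y0: "y0 \<in> Y" and y1: "y1 \<in> Y" using a0 a1 unfolding vext_def y0_def y1_def by auto
    have slice: "Y \<subseteq> {y. y(Vc := c) \<in> A} \<or> Y \<subseteq> {y. y(Vc := c) \<in> B}" for c
    proof -
      have cA: "zariski_closed {y. y(Vc := c) \<in> A}" by (rule comp_closed[OF cA0]) (rule upd_poly)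
      have cB: "zariski_closed {y. y(Vc := c) \<in> B}" by (rule comp_closed[OF cB0]) (rule upd_poly)
      have "Y \<subseteq> {y. y(Vc := c) \<in> A} \<union> {y. y(Vc := c) \<in> B}"
      proof
        fix y assume yY: "y \<in> Y"
        have "(y(Vc := c))(Vc := 0) = y" using v0[OF yY] by auto
        then have "y(Vc := c) \<in> vext Y" unfolding vext_def using yY by simp
        then have "y(Vc := c) \<in> A \<union> B" using sub by auto
        then show "y \<in> {y. y(Vc := c) \<in> A} \<union> {y. y(Vc := c) \<in> B}" by simp
      qed
      then show ?thesis by (rule irredD(3)[OF Y cA cB])
    qed
    have prod0: "f (y0(Vc := c)) * g (y1(Vc := c)) = 0" for c
    proof (cases "Y \<subseteq> {y. y(Vc := c) \<in> A}")
      case True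
      then have "y0(Vc := c) \<in> A" using y0 by auto
      then have "f (y0(Vc := c)) = 0" using f(1) FA(2) by auto
      then show ?thesis by simp
    next
      case False
      then have "Y \<subseteq> {y. y(Vc := c) \<in> B}" using slice[of c] by auto
      then have "y1(Vc := c) \<in> B" using y1 by auto
      then have "g (y1(Vc := c)) = 0" using g(1) FB(2) by auto
      then show ?thesis by simp
    qed
    have uv: "upoly (\<lambda>c. (y(Vc := c)) w)" for y w
      by (cases "w = Vc") auto
    have fg: "f \<in> gpoly" "g \<in> gpoly" using f(1) g(1) FA(1) FB(1) poly_fun_gpoly by auto
    have "(\<forall>c. f (y0(Vc := c)) = 0) \<or> (\<forall>c. g (y1(Vc := c)) = 0)"
      by (rule upoly_domain[OF gpoly_upoly[OF fg(1) uv] gpoly_upoly[OF fg(2) uv] prod0])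
    moreover have "y0(Vc := a0 Vc) = a0" "y1(Vc := a1 Vc) = a1" unfolding y0_def y1_def by auto
    ultimately show False using f(2) g(2) by metis
  qed
qed

lemma codim_ge2:
  assumes "\<And>Y. irred_closed Y \<Longrightarrow> Y \<subseteq> Z \<Longrightarrow>
     \<exists>Y1 Y2. Y \<subset> Y1 \<and> Y1 \<subset> Y2 \<and> irred_closed Y1 \<and> irred_closed Y2 \<and> Y2 \<subseteq> X"
  shows "codim X Z \<ge> 2"
  unfolding codim_def
proof (rule Inf_greatest, clarify)
  fix Y assume Y: "irred_closed Y" "Y \<subseteq> Z"
  obtain Y1 Y2 where c: "Y \<subset> Y1" "Y1 \<subset> Y2" "irred_closed Y1" "irred_closed Y2" "Y2 \<subseteq> X"
    using assms[OF Y] by blast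
  define c where "c = (\<lambda>i::nat. if i = 0 then Y else if i = 1 then Y1 else Y2)"
  have "\<exists>c :: nat \<Rightarrow> pt set. c 0 = Y \<and> (\<forall>i<2. c i \<subset> c (Suc i)) \<and> (\<forall>i\<le>2. irred_closed (c i) \<and> c i \<subseteq> X)"
  proof (rule exI[of _ c], intro conjI allI impI)
    show "c 0 = Y" unfolding c_def by simp
    fix i :: nat
    show "i < 2 \<Longrightarrow> c i \<subset> c (Suc i)" using c unfolding c_def
      by (cases i) (auto simp: less_Suc_eq)
    assume "i \<le> 2"
    then show "irred_closed (c i)" "c i \<subseteq> X" using c Y unfolding c_def by auto
  qed
  then have "enat 2 \<in> {enat n | n. \<exists>c :: nat \<Rightarrow> pt set. c 0 = Y \<and>
      (\<forall>i<n. c i \<subset> c (Suc i)) \<and> (\<forall>i\<le>n. irred_closed (c i) \<and> c i \<subseteq> X)}" by blast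
  then have "enat 2 \<le> codim_irr X Y" unfolding codim_irr_def by (rule Sup_upper)
  then show "2 \<le> codim_irr X Y" by (simp add: numeral_eq_enat)
qed




definition lamv :: "(idx2 \<Rightarrow> complex) \<Rightarrow> idx2 \<Rightarrow> complex" where
  "lamv y = (\<lambda>i. case i of I1 \<Rightarrow> y I2 | I2 \<Rightarrow> - y I1)"
definition bas :: "idx2 \<Rightarrow> idx2 \<Rightarrow> complex" where
  "bas r = (\<lambda>i. if i = r then 1 else 0)"
definition triP :: "(idx2 \<Rightarrow> idx2 \<Rightarrow> idx2 \<Rightarrow> complex) \<Rightarrow> (idx2 \<Rightarrow> complex) \<Rightarrow> (idx2 \<Rightarrow> complex) \<Rightarrow> (idx2 \<Rightarrow> complex) \<Rightarrow> complex" where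
  "triP P x y z =
     P I1 I1 I1 * x I1 * y I1 * z I1 + P I1 I1 I2 * x I1 * y I1 * z I2
   + P I1 I2 I1 * x I1 * y I2 * z I1 + P I1 I2 I2 * x I1 * y I2 * z I2
   + P I2 I1 I1 * x I2 * y I1 * z I1 + P I2 I1 I2 * x I2 * y I1 * z I2
   + P I2 I2 I1 * x I2 * y I2 * z I1 + P I2 I2 I2 * x I2 * y I2 * z I2"

definition mk :: "(idx3 \<Rightarrow> complex) \<Rightarrow> (idx3 \<Rightarrow> idx2 \<Rightarrow> complex) \<Rightarrow> (idx2 \<Rightarrow> idx2 \<Rightarrow> idx2 \<Rightarrow> complex) \<Rightarrow> complex \<Rightarrow> pt" where
  "mk U X P v = (\<lambda>w. case w of Uc k \<Rightarrow> U k | Xc i j \<Rightarrow> X j i | Pc a b c \<Rightarrow> P a b c | Vc \<Rightarrow> v)"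

definition Uof :: "pt \<Rightarrow> idx3 \<Rightarrow> complex" where "Uof a k = a (Uc k)"
definition Xof :: "pt \<Rightarrow> idx3 \<Rightarrow> idx2 \<Rightarrow> complex" where "Xof a j i = a (Xc i j)"
definition Pof :: "pt \<Rightarrow> idx2 \<Rightarrow> idx2 \<Rightarrow> idx2 \<Rightarrow> complex" where "Pof a i j k = a (Pc i j k)"

lemma mk_of: "mk (Uof a) (Xof a) (Pof a) (a Vc) = a"
  by (rule ext, case_tac x) (simp_all add: mk_def Uof_def Xof_def Pof_def)

lemma mk_simps[simp]: "mk U X P v (Uc k) = U k" "mk U X P v (Xc i j) = X j i"
  "mk U X P v (Pc a b c) = P a b c" "mk U X P v Vc = v"
  by (simp_all add: mk_def)

lemma of_mk[simp]: "Uof (mk U X P v) = U" "Xof (mk U X P v) = X" "Pof (mk U X P v) = P"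
  by (simp_all add: Uof_def Xof_def Pof_def fun_eq_iff)

definition LS :: "(idx3 \<Rightarrow> complex) \<Rightarrow> (idx3 \<Rightarrow> idx2 \<Rightarrow> complex) \<Rightarrow> (idx2 \<Rightarrow> idx2 \<Rightarrow> idx2 \<Rightarrow> complex) \<Rightarrow> bool" where
  "LS U X P \<longleftrightarrow>
    (\<forall>r. U J1 * X J1 r = triP P (bas r) (lamv (X J2)) (lamv (X J3))) \<and>
    (\<forall>r. U J2 * X J2 r = triP P (lamv (X J1)) (bas r) (lamv (X J3))) \<and>
    (\<forall>r. U J3 * X J3 r = triP P (lamv (X J1)) (lamv (X J2)) (bas r))"

definition QS :: "(idx3 \<Rightarrow> complex) \<Rightarrow> (idx3 \<Rightarrow> idx2 \<Rightarrow> complex) \<Rightarrow> (idx2 \<Rightarrow> idx2 \<Rightarrow> idx2 \<Rightarrow> complex) \<Rightarrow> bool" where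
  "QS U X P \<longleftrightarrow>
    U J2 * U J3 + det2 (\<lambda>b c. triP P (lamv (X J1)) (bas b) (bas c)) = 0 \<and>
    U J3 * U J1 + det2 (\<lambda>a c. triP P (bas a) (lamv (X J2)) (bas c)) = 0 \<and>
    U J1 * U J2 + det2 (\<lambda>a b. triP P (bas a) (bas b) (lamv (X J3))) = 0"

definition HS where "HS U X P \<longleftrightarrow> LS U X P \<and> QS U X P"

lemma all_idx2: "(\<forall>r. Q r) \<longleftrightarrow> Q I1 \<and> Q I2"
  by (metis idx2.exhaust)

lemma neg_iff: "(A::complex) = -(B - C) \<Longrightarrow> (A = 0) \<longleftrightarrow> (B = C)"
  by auto

lemma neg_iff2: "(A::complex) = (B - C) \<Longrightarrow> (A = 0) \<longleftrightarrow> (B = C)"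
  by auto

lemmas unf = triP_def lamv_def bas_def Dent_def Dmat_def adj2_def det2_def mv_def xvec_def

lemma H_mk: "H_eqs (mk U X P v) \<longleftrightarrow> HS U X P"
proof -
  have a: "(- mk U X P v (Uc J1) * xvec (mk U X P v) J1 r + mv (Dmat J3 (mk U X P v)) (xvec (mk U X P v) J2) r = 0)
     \<longleftrightarrow> (U J1 * X J1 r = triP P (bas r) (lamv (X J2)) (lamv (X J3)))" for r
    by (rule neg_iff, cases r) (simp_all add: unf algebra_simps)
  have b: "(- mk U X P v (Uc J2) * xvec (mk U X P v) J2 r + mv (Dmat J1 (mk U X P v)) (xvec (mk U X P v) J3) r = 0)
     \<longleftrightarrow> (U J2 * X J2 r = triP P (lamv (X J1)) (bas r) (lamv (X J3)))" for r
    by (rule neg_iff, cases r) (simp_all add: unf algebra_simps)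
  have c: "(- mk U X P v (Uc J3) * xvec (mk U X P v) J3 r - mv (adj2 (Dmat J2 (mk U X P v))) (xvec (mk U X P v) J1) r = 0)
     \<longleftrightarrow> (U J3 * X J3 r = triP P (lamv (X J1)) (lamv (X J2)) (bas r))" for r
    by (rule neg_iff, cases r) (simp_all add: unf algebra_simps)
  have d: "mk U X P v (Uc J2) * mk U X P v (Uc J3) + det2 (Dmat J1 (mk U X P v)) =
       U J2 * U J3 + det2 (\<lambda>b c. triP P (lamv (X J1)) (bas b) (bas c))"
    by (simp add: unf algebra_simps)
  have e: "mk U X P v (Uc J3) * mk U X P v (Uc J1) + det2 (Dmat J2 (mk U X P v)) =
       U J3 * U J1 + det2 (\<lambda>a c. triP P (bas a) (lamv (X J2)) (bas c))"
    by (simp add: unf algebra_simps)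
  have f: "mk U X P v (Uc J1) * mk U X P v (Uc J2) + det2 (Dmat J3 (mk U X P v)) =
       U J1 * U J2 + det2 (\<lambda>a b. triP P (bas a) (bas b) (lamv (X J3)))"
    by (simp add: unf algebra_simps)
  show ?thesis unfolding H_eqs_def HS_def LS_def QS_def a b c d e f by simp
qed

lemma H_of: "H_eqs a \<longleftrightarrow> HS (Uof a) (Xof a) (Pof a)"
  using H_mk[of "Uof a" "Xof a" "Pof a" "a Vc"] by (simp add: mk_of)




datatype prm = Gp idx3 idx2 idx2 | Qp idx2 idx2 idx2 | Vp

definition P0z :: "(prm \<Rightarrow> complex) \<Rightarrow> idx2 \<Rightarrow> idx2 \<Rightarrow> idx2 \<Rightarrow> complex" where
  "P0z z a b c = (if a = I2 \<and> b = I2 \<and> c = I2 then 0 else z (Qp a b c))"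

definition dtz :: "(prm \<Rightarrow> complex) \<Rightarrow> idx3 \<Rightarrow> complex" where
  "dtz z j = z (Gp j I1 I1) * z (Gp j I2 I2) - z (Gp j I1 I2) * z (Gp j I2 I1)"

definition tr3 :: "(idx2 \<Rightarrow> idx2 \<Rightarrow> idx2 \<Rightarrow> complex) \<Rightarrow> (idx2 \<Rightarrow> idx2 \<Rightarrow> complex) \<Rightarrow> (idx2 \<Rightarrow> idx2 \<Rightarrow> complex) \<Rightarrow> (idx2 \<Rightarrow> idx2 \<Rightarrow> complex) \<Rightarrow> idx2 \<Rightarrow> idx2 \<Rightarrow> idx2 \<Rightarrow> complex" where
  "tr3 Q g1 g2 g3 a b c = triP Q (g1 a) (g2 b) (g3 c)"

definition Psi :: "(prm \<Rightarrow> complex) \<Rightarrow> pt" where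
  "Psi z = mk (\<lambda>k. case k of J1 \<Rightarrow> dtz z J2 * dtz z J3 * P0z z I1 I2 I2
                          | J2 \<Rightarrow> dtz z J1 * dtz z J3 * P0z z I2 I1 I2
                          | J3 \<Rightarrow> dtz z J1 * dtz z J2 * P0z z I2 I2 I1)
              (\<lambda>j i. z (Gp j i I1))
              (tr3 (P0z z) (\<lambda>a a'. z (Gp J1 a a')) (\<lambda>a a'. z (Gp J2 a a')) (\<lambda>a a'. z (Gp J3 a a')))
              (z Vp)"

lemma Psi_LS: "LS (Uof (Psi z)) (Xof (Psi z)) (Pof (Psi z))"
  unfolding LS_def Psi_def of_mk all_idx2
  by (simp add: unf tr3_def P0z_def dtz_def algebra_simps)

lemma Psi_QS: "QS (Uof (Psi z)) (Xof (Psi z)) (Pof (Psi z))"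
  unfolding QS_def Psi_def of_mk
  by (simp add: unf tr3_def P0z_def dtz_def algebra_simps)

definition nz :: "(idx2 \<Rightarrow> complex) \<Rightarrow> bool" where
  "nz y \<longleftrightarrow> y I1 \<noteq> 0 \<or> y I2 \<noteq> 0"

definition fr :: "(idx2 \<Rightarrow> complex) \<Rightarrow> idx2 \<Rightarrow> complex" where
  "fr y = (if y I1 \<noteq> 0 then (\<lambda>i. if i = I1 then 0 else 1 / y I1) else (\<lambda>i. if i = I1 then - 1 / y I2 else 0))"

lemma fr_det: "nz y \<Longrightarrow> y I1 * fr y I2 - y I2 * fr y I1 = 1"
  unfolding nz_def fr_def by auto

definition adjc :: "(idx2 \<Rightarrow> idx2 \<Rightarrow> complex) \<Rightarrow> idx2 \<Rightarrow> idx2 \<Rightarrow> complex" where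
  "adjc g a' = (case a' of I1 \<Rightarrow> (\<lambda>x. case x of I1 \<Rightarrow> g I2 I2 | I2 \<Rightarrow> - g I1 I2)
                        | I2 \<Rightarrow> (\<lambda>x. case x of I1 \<Rightarrow> - g I2 I1 | I2 \<Rightarrow> g I1 I1))"

definition gm :: "(idx3 \<Rightarrow> idx2 \<Rightarrow> complex) \<Rightarrow> idx3 \<Rightarrow> idx2 \<Rightarrow> idx2 \<Rightarrow> complex" where
  "gm X j i c = (if c = I1 then X j i else fr (X j) i)"

definition pre :: "(idx3 \<Rightarrow> idx2 \<Rightarrow> complex) \<Rightarrow> (idx2 \<Rightarrow> idx2 \<Rightarrow> idx2 \<Rightarrow> complex) \<Rightarrow> complex \<Rightarrow> prm \<Rightarrow> complex" where
  "pre X P v w = (case w of Gp j i c \<Rightarrow> gm X j i c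
      | Qp a b c \<Rightarrow> triP P (adjc (gm X J1) a) (adjc (gm X J2) b) (adjc (gm X J3) c)
      | Vp \<Rightarrow> v)"

lemma tri_lin1: "triP P w y z = w I1 * triP P (bas I1) y z + w I2 * triP P (bas I2) y z"
  by (simp add: unf algebra_simps)
lemma tri_lin2: "triP P y w z = w I1 * triP P y (bas I1) z + w I2 * triP P y (bas I2) z"
  by (simp add: unf algebra_simps)
lemma tri_lin3: "triP P y z w = w I1 * triP P y z (bas I1) + w I2 * triP P y z (bas I2)"
  by (simp add: unf algebra_simps)

lemma tri_neg1: "triP P (\<lambda>i. - w i) y z = - triP P w y z" by (simp add: unf algebra_simps)
lemma tri_neg2: "triP P y (\<lambda>i. - w i) z = - triP P y w z" by (simp add: unf algebra_simps)
lemma tri_neg3: "triP P y z (\<lambda>i. - w i) = - triP P y z w" by (simp add: unf algebra_simps)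

lemma adjc2: "adjc (gm X j) I2 = (\<lambda>i. - lamv (X j) i)"
  by (rule ext, case_tac i) (simp_all add: adjc_def gm_def lamv_def)

lemma adjc1: "adjc (gm X j) I1 = (\<lambda>i. case i of I1 \<Rightarrow> fr (X j) I2 | I2 \<Rightarrow> - fr (X j) I1)"
  by (rule ext, case_tac i) (simp_all add: adjc_def gm_def)

lemma tri_change:
  "triP (\<lambda>a b c. triP P (adjc g1 a) (adjc g2 b) (adjc g3 c)) (g1 a) (g2 b) (g3 c)
    = (g1 I1 I1 * g1 I2 I2 - g1 I1 I2 * g1 I2 I1) * (g2 I1 I1 * g2 I2 I2 - g2 I1 I2 * g2 I2 I1)
      * (g3 I1 I1 * g3 I2 I2 - g3 I1 I2 * g3 I2 I1) * P a b c"
  by (cases a; cases b; cases c) (simp_all add: unf adjc_def algebra_simps)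

lemma LS_D:
  assumes "LS U X P"
  shows "\<And>r. triP P (bas r) (lamv (X J2)) (lamv (X J3)) = U J1 * X J1 r"
    "\<And>r. triP P (lamv (X J1)) (bas r) (lamv (X J3)) = U J2 * X J2 r"
    "\<And>r. triP P (lamv (X J1)) (lamv (X J2)) (bas r) = U J3 * X J3 r"
  using assms unfolding LS_def by auto

lemma LS_q:
  assumes "LS U X P"
  shows "triP P (lamv (X J1)) (lamv (X J2)) (lamv (X J3)) = 0"
proof -
  have "triP P (lamv (X J1)) (lamv (X J2)) (lamv (X J3)) =
     lamv (X J1) I1 * (U J1 * X J1 I1) + lamv (X J1) I2 * (U J1 * X J1 I2)"
    by (subst tri_lin1) (simp add: LS_D[OF assms])
  also have "\<dots> = 0" by (simp add: lamv_def algebra_simps)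
  finally show ?thesis .
qed

lemma dtz_pre: "nz (X j) \<Longrightarrow> dtz (pre X P v) j = 1"
  using fr_det[of "X j"] by (simp add: dtz_def pre_def gm_def algebra_simps)

lemma P0z_pre:
  assumes "LS U X P"
  shows "P0z (pre X P v) = (\<lambda>a b c. triP P (adjc (gm X J1) a) (adjc (gm X J2) b) (adjc (gm X J3) c))"
proof (intro ext)
  fix a b c
  show "P0z (pre X P v) a b c = triP P (adjc (gm X J1) a) (adjc (gm X J2) b) (adjc (gm X J3) c)"
  proof (cases "a = I2 \<and> b = I2 \<and> c = I2")
    case True
    then show ?thesis using LS_q[OF assms]
      by (simp add: P0z_def adjc2 tri_neg1 tri_neg2 tri_neg3)
  next
    case False
    then have "P0z (pre X P v) a b c = pre X P v (Qp a b c)" unfolding P0z_def by meson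
    then show ?thesis by (simp add: pre_def)
  qed
qed

lemma Psi_pre:
  assumes L: "LS U X P" and n1: "nz (X J1)" and n2: "nz (X J2)" and n3: "nz (X J3)"
  shows "Psi (pre X P v) = mk U X P v"
proof (rule ext)
  fix w
  have d: "dtz (pre X P v) J1 = 1" "dtz (pre X P v) J2 = 1" "dtz (pre X P v) J3 = 1"
    using dtz_pre n1 n2 n3 by auto
  have P0: "P0z (pre X P v) = (\<lambda>a b c. triP P (adjc (gm X J1) a) (adjc (gm X J2) b) (adjc (gm X J3) c))"
    by (rule P0z_pre[OF L])
  have rows: "(\<lambda>a a'. pre X P v (Gp j a a')) = gm X j" for j
    by (simp add: pre_def)
  have u1: "triP P (adjc (gm X J1) I1) (adjc (gm X J2) I2) (adjc (gm X J3) I2) = U J1"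
  proof -
    have "triP P (adjc (gm X J1) I1) (adjc (gm X J2) I2) (adjc (gm X J3) I2)
        = triP P (adjc (gm X J1) I1) (lamv (X J2)) (lamv (X J3))"
      by (simp add: adjc2 tri_neg2 tri_neg3)
    also have "\<dots> = adjc (gm X J1) I1 I1 * (U J1 * X J1 I1) + adjc (gm X J1) I1 I2 * (U J1 * X J1 I2)"
      by (subst tri_lin1) (simp add: LS_D[OF L])
    also have "\<dots> = U J1 * (X J1 I1 * fr (X J1) I2 - X J1 I2 * fr (X J1) I1)"
      by (simp add: adjc1 algebra_simps)
    also have "\<dots> = U J1" using fr_det[OF n1] by simp
    finally show ?thesis .
  qed
  have u2: "triP P (adjc (gm X J1) I2) (adjc (gm X J2) I1) (adjc (gm X J3) I2) = U J2"
  proof -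
    have "triP P (adjc (gm X J1) I2) (adjc (gm X J2) I1) (adjc (gm X J3) I2)
        = triP P (lamv (X J1)) (adjc (gm X J2) I1) (lamv (X J3))"
      by (simp add: adjc2 tri_neg1 tri_neg3)
    also have "\<dots> = adjc (gm X J2) I1 I1 * (U J2 * X J2 I1) + adjc (gm X J2) I1 I2 * (U J2 * X J2 I2)"
      by (subst tri_lin2) (simp add: LS_D[OF L])
    also have "\<dots> = U J2 * (X J2 I1 * fr (X J2) I2 - X J2 I2 * fr (X J2) I1)"
      by (simp add: adjc1 algebra_simps)
    also have "\<dots> = U J2" using fr_det[OF n2] by simp
    finally show ?thesis .
  qed
  have u3: "triP P (adjc (gm X J1) I2) (adjc (gm X J2) I2) (adjc (gm X J3) I1) = U J3"
  proof -
    have "triP P (adjc (gm X J1) I2) (adjc (gm X J2) I2) (adjc (gm X J3) I1)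
        = triP P (lamv (X J1)) (lamv (X J2)) (adjc (gm X J3) I1)"
      by (simp add: adjc2 tri_neg1 tri_neg2)
    also have "\<dots> = adjc (gm X J3) I1 I1 * (U J3 * X J3 I1) + adjc (gm X J3) I1 I2 * (U J3 * X J3 I2)"
      by (subst tri_lin3) (simp add: LS_D[OF L])
    also have "\<dots> = U J3 * (X J3 I1 * fr (X J3) I2 - X J3 I2 * fr (X J3) I1)"
      by (simp add: adjc1 algebra_simps)
    also have "\<dots> = U J3" using fr_det[OF n3] by simp
    finally show ?thesis .
  qed
  have dd: "gm X j I1 I1 * gm X j I2 I2 - gm X j I1 I2 * gm X j I2 I1 = 1" if "nz (X j)" for j
    using fr_det[OF that] by (simp add: gm_def algebra_simps)
  show "Psi (pre X P v) w = mk U X P v w"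
  proof (cases w)
    case (Uc k)
    then show ?thesis using u1 u2 u3 d by (cases k) (simp_all add: Psi_def P0)
  next
    case (Xc i j)
    then show ?thesis by (simp add: Psi_def pre_def gm_def)
  next
    case (Pc a b c)
    then show ?thesis
      using tri_change[of P "gm X J1" "gm X J2" "gm X J3" a b c] dd[OF n1] dd[OF n2] dd[OF n3]
      by (simp add: Psi_def P0 tr3_def rows)
  next
    case Vc
    then show ?thesis by (simp add: Psi_def pre_def)
  qed
qed

lemma id_Q1: "triP P y (bas s) (lamv x3) * triP P y (lamv x2) (bas t) - triP P y (lamv x2) (lamv x3) * triP P y (bas s) (bas t)
   = - det2 (\<lambda>b c. triP P y (bas b) (bas c)) * x2 s * x3 t"
  by (cases s; cases t) (simp_all add: unf algebra_simps)
lemma id_Q2: "triP P (bas s) y (lamv x3) * triP P (lamv x1) y (bas t) - triP P (lamv x1) y (lamv x3) * triP P (bas s) y (bas t)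
   = - det2 (\<lambda>a c. triP P (bas a) y (bas c)) * x1 s * x3 t"
  by (cases s; cases t) (simp_all add: unf algebra_simps)
lemma id_Q3: "triP P (bas s) (lamv x2) y * triP P (lamv x1) (bas t) y - triP P (lamv x1) (lamv x2) y * triP P (bas s) (bas t) y
   = - det2 (\<lambda>a b. triP P (bas a) (bas b) y) * x1 s * x2 t"
  by (cases s; cases t) (simp_all add: unf algebra_simps)

lemma nz_ex: "nz y \<Longrightarrow> \<exists>s. y s \<noteq> 0"
  unfolding nz_def by auto

lemma KL:
  assumes L: "LS U X P" and n1: "nz (X J1)" and n2: "nz (X J2)" and n3: "nz (X J3)"
  shows "QS U X P"
proof -
  obtain s1 where s1: "X J1 s1 \<noteq> 0" using nz_ex[OF n1] by blast
  obtain s2 where s2: "X J2 s2 \<noteq> 0" using nz_ex[OF n2] by blast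
  obtain s3 where s3: "X J3 s3 \<noteq> 0" using nz_ex[OF n3] by blast
  note D = LS_D[OF L] and q = LS_q[OF L]
  have "(U J2 * U J3 + det2 (\<lambda>b c. triP P (lamv (X J1)) (bas b) (bas c))) * X J2 s2 * X J3 s3
     = (U J2 * X J2 s2) * (U J3 * X J3 s3) + det2 (\<lambda>b c. triP P (lamv (X J1)) (bas b) (bas c)) * X J2 s2 * X J3 s3"
    by (simp add: algebra_simps)
  also have "\<dots> = 0"
    using id_Q1[of P "lamv (X J1)" s2 "X J3" "X J2" s3] by (simp add: D[symmetric] q)
  finally have 1: "U J2 * U J3 + det2 (\<lambda>b c. triP P (lamv (X J1)) (bas b) (bas c)) = 0"
    using s2 s3 by simp
  have "(U J3 * U J1 + det2 (\<lambda>a c. triP P (bas a) (lamv (X J2)) (bas c))) * X J1 s1 * X J3 s3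
     = (U J1 * X J1 s1) * (U J3 * X J3 s3) + det2 (\<lambda>a c. triP P (bas a) (lamv (X J2)) (bas c)) * X J1 s1 * X J3 s3"
    by (simp add: algebra_simps)
  also have "\<dots> = 0"
    using id_Q2[of P s1 "lamv (X J2)" "X J3" "X J1" s3] by (simp add: D[symmetric] q)
  finally have 2: "U J3 * U J1 + det2 (\<lambda>a c. triP P (bas a) (lamv (X J2)) (bas c)) = 0"
    using s1 s3 by simp
  have "(U J1 * U J2 + det2 (\<lambda>a b. triP P (bas a) (bas b) (lamv (X J3)))) * X J1 s1 * X J2 s2
     = (U J1 * X J1 s1) * (U J2 * X J2 s2) + det2 (\<lambda>a b. triP P (bas a) (bas b) (lamv (X J3))) * X J1 s1 * X J2 s2"
    by (simp add: algebra_simps)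
  also have "\<dots> = 0"
    using id_Q3[of P s1 "X J2" "lamv (X J3)" "X J1" s2] by (simp add: D[symmetric] q)
  finally have 3: "U J1 * U J2 + det2 (\<lambda>a b. triP P (bas a) (bas b) (lamv (X J3))) = 0"
    using s1 s2 by simp
  show ?thesis unfolding QS_def using 1 2 3 by simp
qed

definition PsiL :: "(prm \<Rightarrow> complex) \<Rightarrow> pt" where
  "PsiL z = Psi (z(Gp J1 I2 I1 := 0))"

lemma Psi_poly: "(\<lambda>z. Psi z w) \<in> gpoly"
proof (cases w)
  case (Uc k)
  then show ?thesis
    by (cases k) (simp_all add: Psi_def dtz_def P0z_def, (intro gpoly.intros gp_diff)+)
next
  case (Xc i j)
  then show ?thesis by (simp add: Psi_def gpoly.intros)
next
  case (Pc a b c)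
  then show ?thesis
    by (simp add: Psi_def tr3_def triP_def P0z_def, (intro gpoly.intros gp_diff)+)
next
  case Vc
  then show ?thesis by (simp add: Psi_def gpoly.intros)
qed

lemma PsiL_poly: "(\<lambda>z. PsiL z w) \<in> gpoly"
proof -
  have "(\<lambda>z. (z(Gp J1 I2 I1 := 0)) p) \<in> gpoly" for p
    by (cases "p = Gp J1 I2 I1") (simp_all add: gpoly.intros)
  then show ?thesis unfolding PsiL_def
    by (rule gpoly_comp[OF Psi_poly])
qed

lemma Psi_H: "H_eqs (Psi z)"
  unfolding H_of HS_def using Psi_LS Psi_QS by simp

lemma PsiL_H: "H_eqs (PsiL z)"
  unfolding PsiL_def by (rule Psi_H)

lemma PsiL_x21: "PsiL z (Xc I2 J1) = 0"
  by (simp add: PsiL_def Psi_def)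

definition Gs :: "pt set" where
  "Gs = {a. H_eqs a \<and> nz (Xof a J1) \<and> nz (Xof a J2) \<and> nz (Xof a J3)}"

definition Ts :: "pt set" where
  "Ts = {a. a \<in> Gs \<and> a (Xc I2 J1) = 0}"

lemma Gs_Psi: "Gs \<subseteq> range Psi"
proof
  fix a assume "a \<in> Gs"
  then have H: "HS (Uof a) (Xof a) (Pof a)" and n: "nz (Xof a J1)" "nz (Xof a J2)" "nz (Xof a J3)"
    unfolding Gs_def H_of by auto
  have "Psi (pre (Xof a) (Pof a) (a Vc)) = mk (Uof a) (Xof a) (Pof a) (a Vc)"
    using Psi_pre H n unfolding HS_def by blast
  then show "a \<in> range Psi" by (metis mk_of rangeI)
qed

lemma Ts_PsiL: "Ts \<subseteq> range PsiL"
proof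
  fix a assume "a \<in> Ts"
  then have H: "HS (Uof a) (Xof a) (Pof a)" and n: "nz (Xof a J1)" "nz (Xof a J2)" "nz (Xof a J3)"
    and x: "a (Xc I2 J1) = 0"
    unfolding Ts_def Gs_def H_of by auto
  let ?z = "pre (Xof a) (Pof a) (a Vc)"
  have "Psi ?z = mk (Uof a) (Xof a) (Pof a) (a Vc)"
    using Psi_pre H n unfolding HS_def by blast
  moreover have "?z(Gp J1 I2 I1 := 0) = ?z"
    using x by (auto simp: pre_def gm_def Xof_def)
  ultimately have "PsiL ?z = a" unfolding PsiL_def by (simp add: mk_of)
  then show "a \<in> range PsiL" by (metis rangeI)
qed

lemma pf_diff: "f \<in> poly_fun \<Longrightarrow> g \<in> poly_fun \<Longrightarrow> (\<lambda>a. f a - g a) \<in> poly_fun"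
  using gp_diff gpoly_poly_fun poly_fun_gpoly by blast

definition he1 :: "idx2 \<Rightarrow> pt \<Rightarrow> complex" where
  "he1 r a = - a (Uc J1) * xvec a J1 r + mv (Dmat J3 a) (xvec a J2) r"
definition he2 :: "idx2 \<Rightarrow> pt \<Rightarrow> complex" where
  "he2 r a = - a (Uc J2) * xvec a J2 r + mv (Dmat J1 a) (xvec a J3) r"
definition he3 :: "idx2 \<Rightarrow> pt \<Rightarrow> complex" where
  "he3 r a = - a (Uc J3) * xvec a J3 r - mv (adj2 (Dmat J2 a)) (xvec a J1) r"
definition hq1 :: "pt \<Rightarrow> complex" where "hq1 a = a (Uc J2) * a (Uc J3) + det2 (Dmat J1 a)"
definition hq2 :: "pt \<Rightarrow> complex" where "hq2 a = a (Uc J3) * a (Uc J1) + det2 (Dmat J2 a)"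
definition hq3 :: "pt \<Rightarrow> complex" where "hq3 a = a (Uc J1) * a (Uc J2) + det2 (Dmat J3 a)"

definition Hpolys :: "(pt \<Rightarrow> complex) set" where
  "Hpolys = range he1 \<union> range he2 \<union> range he3 \<union> {hq1, hq2, hq3}"

lemma pf_neg: "f \<in> poly_fun \<Longrightarrow> (\<lambda>a. - f a) \<in> poly_fun"
  using gp_neg gpoly_poly_fun poly_fun_gpoly by blast

lemma Hpolys_poly: "Hpolys \<subseteq> poly_fun"
proof -
  have r: "he1 r \<in> poly_fun" "he2 r \<in> poly_fun" "he3 r \<in> poly_fun" for r
    unfolding he1_def he2_def he3_def
    by (cases r; simp add: unf; (intro poly_fun.intros pf_diff pf_neg)+)+
  have q: "hq1 \<in> poly_fun" "hq2 \<in> poly_fun" "hq3 \<in> poly_fun"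
    unfolding hq1_def hq2_def hq3_def
    by (simp_all add: unf, (intro poly_fun.intros pf_diff pf_neg)+)
  show ?thesis unfolding Hpolys_def using r q by auto
qed

lemma H_eqs_he: "H_eqs a \<longleftrightarrow> (\<forall>r. he1 r a = 0) \<and> (\<forall>r. he2 r a = 0) \<and> (\<forall>r. he3 r a = 0)
   \<and> hq1 a = 0 \<and> hq2 a = 0 \<and> hq3 a = 0"
  by (simp only: H_eqs_def he1_def he2_def he3_def hq1_def hq2_def hq3_def)

lemma coneH_eq: "coneH = {a. \<forall>f\<in>Hpolys. f a = 0}"
  unfolding coneH_def Hpolys_def H_eqs_he by auto

lemma coneH_closed: "zariski_closed coneH"
  unfolding zariski_closed_def using coneH_eq Hpolys_poly by blast

lemma coord_closed: "zariski_closed {a. a w = (0::complex)}"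
  unfolding zariski_closed_def
  by (rule exI[of _ "{\<lambda>a. a w}"]) (auto intro: poly_fun.intros)




lemma tri_addP: "triP (\<lambda>a b c. P a b c + Q a b c) x y z = triP P x y z + triP Q x y z"
  by (simp add: triP_def algebra_simps)
lemma tri_smulP: "triP (\<lambda>a b c. t * Q a b c) x y z = t * triP Q x y z"
  by (simp add: triP_def algebra_simps)
lemma tri_rank: "triP (\<lambda>a b c. bas p a * bas q b * bas r c) x y z = x p * y q * z r"
  by (cases p; cases q; cases r) (simp_all add: triP_def bas_def)
lemma tri_rank': "triP (\<lambda>a b c. bas p a * (bas q b * bas r c)) x y z = x p * y q * z r"
  by (cases p; cases q; cases r) (simp_all add: triP_def bas_def)
lemma tri_smul1: "triP P (\<lambda>i. t * x i) y z = t * triP P x y z"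
  by (simp add: triP_def algebra_simps)
lemma tri_smul2: "triP P y (\<lambda>i. t * x i) z = t * triP P y x z"
  by (simp add: triP_def algebra_simps)
lemma tri_smul3: "triP P y z (\<lambda>i. t * x i) = t * triP P y z x"
  by (simp add: triP_def algebra_simps)
lemma tri_zero1: "triP P (\<lambda>i. 0) y z = 0" by (simp add: triP_def)
lemma tri_zero2: "triP P y (\<lambda>i. 0) z = 0" by (simp add: triP_def)
lemma tri_zero3: "triP P y z (\<lambda>i. 0) = 0" by (simp add: triP_def)
lemma lamv_smul: "lamv (\<lambda>i. t * y i) = (\<lambda>i. t * lamv y i)"
  by (rule ext, case_tac i) (simp_all add: lamv_def)
lemma lamv_zero: "\<not> nz y \<Longrightarrow> lamv y = (\<lambda>i. 0)"
  by (rule ext, case_tac i) (simp_all add: lamv_def nz_def)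
lemma zero_vec: "\<not> nz y \<Longrightarrow> y = (\<lambda>i. 0)"
  by (rule ext, case_tac i) (simp_all add: nz_def)
lemma nz_lamv: "nz y \<Longrightarrow> nz (lamv y)"
  by (auto simp: nz_def lamv_def)
lemma lamv_bas1: "lamv (bas I1) I1 = 0"
  by (simp add: lamv_def bas_def)

lemma par:
  assumes "v I1 * lamv x I1 + v I2 * lamv x I2 = 0" "x s \<noteq> 0"
  shows "v r = (v s / x s) * x r"
proof -
  have "v I1 * x I2 - v I2 * x I1 = 0" using assms(1) unfolding lamv_def by simp
  then have h: "v I1 * x I2 = v I2 * x I1" by simp
  have k: "v r * x s = v s * x r"
    using h by (cases r; cases s) (simp_all add: algebra_simps)
  show ?thesis using k assms(2) by (simp add: field_simps)
qed

lemma mk_upoly: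
  assumes "\<And>k. upoly (\<lambda>t. U' t k)" "\<And>j i. upoly (\<lambda>t. X' t j i)" "\<And>a b c. upoly (\<lambda>t. P' t a b c)"
  shows "upoly (\<lambda>t. mk (U' t) (X' t) (P' t) v w)"
  using assms by (cases w) auto

lemma mk_Ts:
  assumes "HS U X P" "nz (X J1)" "nz (X J2)" "nz (X J3)" "X J1 I2 = 0"
  shows "mk U X P v \<in> Ts"
  using assms unfolding Ts_def Gs_def by (simp add: H_mk)

lemma LS_Ts:
  assumes "LS U X P" "nz (X J1)" "nz (X J2)" "nz (X J3)" "X J1 I2 = 0"
  shows "mk U X P v \<in> Ts"
  using assms KL mk_Ts HS_def by blast

lemma bas_sym: "bas r s = bas s r"
  by (auto simp: bas_def)

lemma bas_same[simp]: "bas r r = 1" by (simp add: bas_def)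

lemmas trisimps = tri_addP tri_smulP tri_rank tri_rank' tri_smul1 tri_smul2 tri_smul3 tri_zero1 tri_zero2 tri_zero3 lamv_smul

lemma LS_unf:
  "LS U X P \<longleftrightarrow>
    (\<forall>r. U J1 * X J1 r = triP P (bas r) (lamv (X J2)) (lamv (X J3))) \<and>
    (\<forall>r. U J2 * X J2 r = triP P (lamv (X J1)) (bas r) (lamv (X J3))) \<and>
    (\<forall>r. U J3 * X J3 r = triP P (lamv (X J1)) (lamv (X J2)) (bas r))"
  by (rule LS_def)

lemma S1:
  assumes H: "HS U X P" and z1: "\<not> nz (X J1)" and n2: "nz (X J2)" and n3: "nz (X J3)"
  shows "mk U X P v \<in> zcl Ts"
proof -
  have L: "LS U X P" using H unfolding HS_def by simp
  note D = LS_D[OF L]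
  have l1: "lamv (X J1) = (\<lambda>i. 0)" by (rule lamv_zero[OF z1])
  have x1: "X J1 = (\<lambda>i. 0)" by (rule zero_vec[OF z1])
  have t0: "triP P (bas r) (lamv (X J2)) (lamv (X J3)) = 0" for r using D(1)[of r] x1 by simp
  obtain s2 where s2: "X J2 s2 \<noteq> 0" using nz_ex[OF n2] by blast
  obtain s3 where s3: "X J3 s3 \<noteq> 0" using nz_ex[OF n3] by blast
  have "U J2 * X J2 s2 = 0" using D(2)[of s2] l1 by (simp add: tri_zero1)
  then have u2: "U J2 = 0" using s2 by simp
  have "U J3 * X J3 s3 = 0" using D(3)[of s3] l1 by (simp add: tri_zero1)
  then have u3: "U J3 = 0" using s3 by simp
  obtain p2 where p2: "lamv (X J2) p2 \<noteq> 0" using nz_ex[OF nz_lamv[OF n2]] by blast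
  obtain p3 where p3: "lamv (X J3) p3 \<noteq> 0" using nz_ex[OF nz_lamv[OF n3]] by blast
  define c0 where "c0 = U J1 / (lamv (X J2) p2 * lamv (X J3) p3)"
  have c0: "c0 * (lamv (X J2) p2 * lamv (X J3) p3) = U J1" using p2 p3 unfolding c0_def by simp
  define V2 where "V2 r = triP P (lamv (bas I1)) (bas r) (lamv (X J3))" for r
  define V3 where "V3 r = triP P (lamv (bas I1)) (lamv (X J2)) (bas r)" for r
  have q0: "triP P (lamv (bas I1)) (lamv (X J2)) (lamv (X J3)) = 0"
    by (subst tri_lin1) (simp add: t0)
  have V2dot: "V2 I1 * lamv (X J2) I1 + V2 I2 * lamv (X J2) I2 = 0"
    using tri_lin2[of P "lamv (bas I1)" "lamv (X J2)" "lamv (X J3)"] q0 by (simp add: V2_def algebra_simps)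
  have V3dot: "V3 I1 * lamv (X J3) I1 + V3 I2 * lamv (X J3) I2 = 0"
    using tri_lin3[of P "lamv (bas I1)" "lamv (X J2)" "lamv (X J3)"] q0 by (simp add: V3_def algebra_simps)
  define k2 where "k2 = V2 s2 / X J2 s2"
  define k3 where "k3 = V3 s3 / X J3 s3"
  have V2k: "V2 r = k2 * X J2 r" for r unfolding k2_def by (rule par[OF V2dot s2])
  have V3k: "V3 r = k3 * X J3 r" for r unfolding k3_def by (rule par[OF V3dot s3])
  define U' where "U' t = U(J2 := t * k2, J3 := t * k3)" for t
  define X' where "X' t = X(J1 := (\<lambda>i. t * bas I1 i))" for t
  define P' where "P' t = (\<lambda>a b c. P a b c + t * (c0 * (bas I1 a * bas p2 b * bas p3 c)))" for t
  define \<gamma> where "\<gamma> t = mk (U' t) (X' t) (P' t) v" for t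
  have "\<gamma> 0 \<in> zcl Ts"
  proof (rule curve_cl)
    have a: "upoly (\<lambda>t. U' t k)" for k by (cases k) (auto simp: U'_def intro!: upoly_mult upoly_const upoly_id upoly_add)
    have b: "upoly (\<lambda>t. X' t j i)" for j i by (cases j) (auto simp: X'_def)
    have c: "upoly (\<lambda>t. P' t a b c)" for a b c unfolding P'_def by (intro upoly_add upoly_mult upoly_const upoly_id)
    show "upoly (\<lambda>t. \<gamma> t w)" for w unfolding \<gamma>_def by (rule mk_upoly[OF a b c])
    show "\<gamma> t \<in> Ts" if t: "t \<noteq> 0" for t
      unfolding \<gamma>_def
    proof (rule LS_Ts)
      show "LS (U' t) (X' t) (P' t)" unfolding LS_unf
      proof (intro conjI allI)
        fix r
        show "U' t J1 * X' t J1 r = triP (P' t) (bas r) (lamv (X' t J2)) (lamv (X' t J3))"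
          using c0 apply (simp add: U'_def X'_def P'_def trisimps t0)
          by (cases r) (simp_all add: bas_def)
        show "U' t J2 * X' t J2 r = triP (P' t) (lamv (X' t J1)) (bas r) (lamv (X' t J3))"
          using V2k[of r] by (simp add: U'_def X'_def P'_def trisimps lamv_bas1 V2_def algebra_simps)
        show "U' t J3 * X' t J3 r = triP (P' t) (lamv (X' t J1)) (lamv (X' t J2)) (bas r)"
          using V3k[of r] by (simp add: U'_def X'_def P'_def trisimps lamv_bas1 V3_def algebra_simps)
      qed
      show "nz (X' t J1)" using t by (simp add: X'_def nz_def bas_def)
      show "nz (X' t J2)" using n2 by (simp add: X'_def)
      show "nz (X' t J3)" using n3 by (simp add: X'_def)
      show "X' t J1 I2 = 0" by (simp add: X'_def bas_def)
    qed
  qed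
  moreover have "\<gamma> 0 = mk U X P v"
  proof -
    have "U' 0 = U" unfolding U'_def using u2 u3 by (auto simp: fun_eq_iff)
    moreover have "X' 0 = X" unfolding X'_def using x1 by (auto simp: fun_eq_iff)
    moreover have "P' 0 = P" unfolding P'_def by simp
    ultimately show ?thesis unfolding \<gamma>_def by simp
  qed
  ultimately show ?thesis by simp
qed

lemma kernel:
  assumes "det2 M = 0"
  shows "\<exists>w. nz w \<and> (\<forall>r. M r I1 * w I1 + M r I2 * w I2 = 0)"
proof (cases "M I1 I1 \<noteq> 0 \<or> M I1 I2 \<noteq> 0")
  case True
  let ?w = "\<lambda>i. case i of I1 \<Rightarrow> - M I1 I2 | I2 \<Rightarrow> M I1 I1"
  have "nz ?w" using True by (auto simp: nz_def)
  moreover have "\<forall>r. M r I1 * ?w I1 + M r I2 * ?w I2 = 0"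
    using assms by (auto simp: all_idx2 det2_def algebra_simps)
  ultimately show ?thesis by blast
next
  case False
  show ?thesis
  proof (cases "M I2 I1 \<noteq> 0 \<or> M I2 I2 \<noteq> 0")
    case True
    let ?w = "\<lambda>i. case i of I1 \<Rightarrow> - M I2 I2 | I2 \<Rightarrow> M I2 I1"
    have "nz ?w" using True by (auto simp: nz_def)
    moreover have "\<forall>r. M r I1 * ?w I1 + M r I2 * ?w I2 = 0"
      using False by (auto simp: all_idx2 algebra_simps)
    ultimately show ?thesis by blast
  next
    case False2: False
    have "nz (bas I1)" by (simp add: nz_def bas_def)
    moreover have "\<forall>r. M r I1 * bas I1 I1 + M r I2 * bas I1 I2 = 0"
      using False False2 by (auto simp: all_idx2 bas_def)
    ultimately show ?thesis by blast
  qed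
qed

lemma detzero:
  assumes "\<And>r. M r I1 * w I1 + M r I2 * w I2 = 0" "nz w"
  shows "det2 M = 0"
proof -
  have "det2 M * w I1 = M I2 I2 * (M I1 I1 * w I1 + M I1 I2 * w I2) - M I1 I2 * (M I2 I1 * w I1 + M I2 I2 * w I2)"
    by (simp add: det2_def algebra_simps)
  then have 1: "det2 M * w I1 = 0" using assms(1) by simp
  have "det2 M * w I2 = M I1 I1 * (M I2 I1 * w I1 + M I2 I2 * w I2) - M I2 I1 * (M I1 I1 * w I1 + M I1 I2 * w I2)"
    by (simp add: det2_def algebra_simps)
  then have 2: "det2 M * w I2 = 0" using assms(1) by simp
  show ?thesis using 1 2 assms(2) unfolding nz_def by auto
qed

lemma quadroot: "\<exists>y. nz y \<and> det2 (\<lambda>a c. y I1 * A a c + y I2 * B a c) = 0"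
proof (cases "det2 A = 0")
  case True
  have "nz (bas I1)" by (simp add: nz_def bas_def)
  moreover have "det2 (\<lambda>a c. bas I1 I1 * A a c + bas I1 I2 * B a c) = 0"
    using True by (simp add: bas_def)
  ultimately show ?thesis by blast
next
  case False
  define \<alpha> where "\<alpha> = det2 A"
  define \<beta> where "\<beta> = A I1 I1 * B I2 I2 + A I2 I2 * B I1 I1 - A I1 I2 * B I2 I1 - A I2 I1 * B I1 I2"
  define \<gamma> where "\<gamma> = det2 B"
  define s where "s = csqrt (\<beta>^2 - 4 * \<alpha> * \<gamma>)"
  have s2: "s^2 = \<beta>^2 - 4 * \<alpha> * \<gamma>" unfolding s_def by (rule power2_csqrt)
  have a0: "\<alpha> \<noteq> 0" using False unfolding \<alpha>_def by simp
  define z where "z = (s - \<beta>) / (2 * \<alpha>)"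
  have zz: "2 * \<alpha> * z + \<beta> = s" unfolding z_def using a0 by (simp add: field_simps)
  have "4 * \<alpha> * (\<alpha> * z^2 + \<beta> * z + \<gamma>) = (2 * \<alpha> * z + \<beta>)^2 - (\<beta>^2 - 4 * \<alpha> * \<gamma>)"
    by (simp add: power2_eq_square algebra_simps)
  also have "\<dots> = 0" using zz s2 by simp
  finally have q: "\<alpha> * z^2 + \<beta> * z + \<gamma> = 0" using a0 by simp
  let ?y = "\<lambda>i. case i of I1 \<Rightarrow> z | I2 \<Rightarrow> (1::complex)"
  have "nz ?y" by (simp add: nz_def)
  moreover have "det2 (\<lambda>a c. ?y I1 * A a c + ?y I2 * B a c) = \<alpha> * z^2 + \<beta> * z + \<gamma>"
    unfolding \<alpha>_def \<beta>_def \<gamma>_def by (simp add: det2_def power2_eq_square algebra_simps)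
  ultimately show ?thesis using q by metis
qed

lemma tri_lamv2: "triP P x (lamv y) z = y I1 * (- triP P x (bas I2) z) + y I2 * triP P x (bas I1) z"
  by (subst tri_lin2) (simp add: lamv_def algebra_simps)
lemma tri_lamv3: "triP P x z (lamv y) = y I1 * (- triP P x z (bas I2)) + y I2 * triP P x z (bas I1)"
  by (subst tri_lin3) (simp add: lamv_def algebra_simps)

lemma quad2: "\<exists>y. nz y \<and> det2 (\<lambda>a c. triP P (bas a) (lamv y) (bas c)) = 0"
  using quadroot[of "\<lambda>a c. - triP P (bas a) (bas I2) (bas c)" "\<lambda>a c. triP P (bas a) (bas I1) (bas c)"]
  by (simp add: tri_lamv2)
lemma quad3: "\<exists>y. nz y \<and> det2 (\<lambda>a b. triP P (bas a) (bas b) (lamv y)) = 0"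
  using quadroot[of "\<lambda>a c. - triP P (bas a) (bas c) (bas I2)" "\<lambda>a c. triP P (bas a) (bas c) (bas I1)"]
  by (simp add: tri_lamv3)

definition S1set :: "pt set" where
  "S1set = {mk U X P v | U X P v. HS U X P \<and> \<not> nz (X J1) \<and> nz (X J2) \<and> nz (X J3)}"

lemma S1set_sub: "S1set \<subseteq> zcl Ts"
  unfolding S1set_def using S1 by blast

lemma QS_D:
  assumes "QS U X P"
  shows "U J2 * U J3 + det2 (\<lambda>b c. triP P (lamv (X J1)) (bas b) (bas c)) = 0"
    "U J3 * U J1 + det2 (\<lambda>a c. triP P (bas a) (lamv (X J2)) (bas c)) = 0"
    "U J1 * U J2 + det2 (\<lambda>a b. triP P (bas a) (bas b) (lamv (X J3))) = 0"
  using assms unfolding QS_def by auto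

lemma S12gen:
  assumes H: "HS U X P" and z1: "\<not> nz (X J1)" and z2: "\<not> nz (X J2)" and n3: "nz (X J3)"
    and u1: "U J1 \<noteq> 0" and u2: "U J2 \<noteq> 0"
  shows "mk U X P v \<in> zcl Ts"
proof -
  have L: "LS U X P" and Q: "QS U X P" using H unfolding HS_def by simp_all
  note D = LS_D[OF L]
  have l1: "lamv (X J1) = (\<lambda>i. 0)" by (rule lamv_zero[OF z1])
  have x1: "X J1 = (\<lambda>i. 0)" by (rule zero_vec[OF z1])
  have x2: "X J2 = (\<lambda>i. 0)" by (rule zero_vec[OF z2])
  obtain s3 where s3: "X J3 s3 \<noteq> 0" using nz_ex[OF n3] by blast
  have "U J3 * X J3 s3 = 0" using D(3)[of s3] l1 by (simp add: tri_zero1)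
  then have u3: "U J3 = 0" using s3 by simp
  define B where "B a b = triP P (bas a) (bas b) (lamv (X J3))" for a b
  have Q3: "U J1 * U J2 + det2 B = 0" using QS_D(3)[OF Q] unfolding B_def by simp
  define y1 where "y1 = (\<lambda>i. U J2 * bas I1 i)"
  define y2 where "y2 = (\<lambda>i. - B I2 i)"
  have E1: "U J1 * y1 r = triP P (bas r) (lamv y2) (lamv (X J3))" for r
  proof -
    have "triP P (bas r) (lamv y2) (lamv (X J3)) = lamv y2 I1 * B r I1 + lamv y2 I2 * B r I2"
      by (subst tri_lin2) (simp add: B_def)
    moreover have "lamv y2 I1 * B I1 I1 + lamv y2 I2 * B I1 I2 = U J1 * y1 I1"
    proof -
      have "lamv y2 I1 * B I1 I1 + lamv y2 I2 * B I1 I2 = - (B I2 I2 * B I1 I1) + B I2 I1 * B I1 I2"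
        by (simp add: y2_def lamv_def)
      also have "\<dots> = U J1 * U J2" using Q3 unfolding det2_def by algebra
      finally show ?thesis by (simp add: y1_def bas_def)
    qed
    moreover have "lamv y2 I1 * B I2 I1 + lamv y2 I2 * B I2 I2 = U J1 * y1 I2"
      by (simp add: y1_def y2_def lamv_def bas_def algebra_simps)
    ultimately show ?thesis by (cases r) simp_all
  qed
  have E2: "U J2 * y2 r = triP P (lamv y1) (bas r) (lamv (X J3))" for r
  proof -
    have "triP P (lamv y1) (bas r) (lamv (X J3)) = lamv y1 I1 * B I1 r + lamv y1 I2 * B I2 r"
      by (subst tri_lin1) (simp add: B_def)
    then show ?thesis by (simp add: y1_def y2_def lamv_def bas_def)
  qed
  define V3 where "V3 r = triP P (lamv y1) (lamv y2) (bas r)" for r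
  have V3dot: "V3 I1 * lamv (X J3) I1 + V3 I2 * lamv (X J3) I2 = 0"
  proof -
    have "V3 I1 * lamv (X J3) I1 + V3 I2 * lamv (X J3) I2 = triP P (lamv y1) (lamv y2) (lamv (X J3))"
      using tri_lin3[of P "lamv y1" "lamv y2" "lamv (X J3)"] by (simp add: V3_def algebra_simps)
    also have "\<dots> = lamv y1 I1 * (U J1 * y1 I1) + lamv y1 I2 * (U J1 * y1 I2)"
      by (subst tri_lin1) (simp add: E1)
    also have "\<dots> = 0" by (simp add: lamv_def algebra_simps)
    finally show ?thesis .
  qed
  define k3 where "k3 = V3 s3 / X J3 s3"
  have V3k: "V3 r = k3 * X J3 r" for r unfolding k3_def by (rule par[OF V3dot s3])
  have ny2: "nz y2"
  proof (rule ccontr)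
    assume "\<not> nz y2"
    then have "B I2 I1 = 0" "B I2 I2 = 0" unfolding nz_def y2_def by auto
    then have "det2 B = 0" by (simp add: det2_def)
    then show False using Q3 u1 u2 by simp
  qed
  define U' where "U' t = U(J3 := t * t * k3)" for t
  define X' where "X' t = X(J1 := (\<lambda>i. t * y1 i), J2 := (\<lambda>i. t * y2 i))" for t
  define \<gamma> where "\<gamma> t = mk (U' t) (X' t) P v" for t
  have "\<gamma> 0 \<in> zcl Ts"
  proof (rule curve_cl)
    have a: "upoly (\<lambda>t. U' t k)" for k by (cases k) (auto simp: U'_def intro!: upoly_mult upoly_const upoly_id upoly_add)
    have b: "upoly (\<lambda>t. X' t j i)" for j i by (cases j) (auto simp: X'_def)
    show "upoly (\<lambda>t. \<gamma> t w)" for w unfolding \<gamma>_def by (rule mk_upoly[OF a b]) auto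
    show "\<gamma> t \<in> Ts" if t: "t \<noteq> 0" for t
      unfolding \<gamma>_def
    proof (rule LS_Ts)
      show "LS (U' t) (X' t) P" unfolding LS_unf
      proof (intro conjI allI)
        fix r
        show "U' t J1 * X' t J1 r = triP P (bas r) (lamv (X' t J2)) (lamv (X' t J3))"
          using E1[of r] by (simp add: U'_def X'_def trisimps)
        show "U' t J2 * X' t J2 r = triP P (lamv (X' t J1)) (bas r) (lamv (X' t J3))"
          using E2[of r] by (simp add: U'_def X'_def trisimps)
        show "U' t J3 * X' t J3 r = triP P (lamv (X' t J1)) (lamv (X' t J2)) (bas r)"
          using V3k[of r] by (simp add: U'_def X'_def trisimps V3_def algebra_simps)
      qed
      show "nz (X' t J1)" using t u2 by (simp add: X'_def nz_def bas_def y1_def)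
      show "nz (X' t J2)" using t ny2 by (simp add: X'_def nz_def)
      show "nz (X' t J3)" using n3 by (simp add: X'_def)
      show "X' t J1 I2 = 0" by (simp add: X'_def bas_def y1_def)
    qed
  qed
  moreover have "\<gamma> 0 = mk U X P v"
  proof -
    have "U' 0 = U" unfolding U'_def using u3 by (auto simp: fun_eq_iff)
    moreover have "X' 0 = X" unfolding X'_def using x1 x2 by (auto simp: fun_eq_iff)
    ultimately show ?thesis unfolding \<gamma>_def by simp
  qed
  ultimately show ?thesis by simp
qed

definition S12g :: "pt set" where
  "S12g = {mk U X P v | U X P v. HS U X P \<and> \<not> nz (X J1) \<and> \<not> nz (X J2) \<and> nz (X J3) \<and> U J1 \<noteq> 0 \<and> U J2 \<noteq> 0}"

lemma S12g_sub: "S12g \<subseteq> zcl Ts"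
  unfolding S12g_def using S12gen by blast

lemma det2_zero: "det2 (\<lambda>a b. 0) = 0" by (simp add: det2_def)
lemma det2_smul: "det2 (\<lambda>a b. t * M a b) = t * t * det2 M" by (simp add: det2_def algebra_simps)
lemma det_rank1: "det2 (\<lambda>a b. M a b + s * (bas i a * bas j b)) = det2 M + s * adj2 M j i"
  by (cases i; cases j) (simp_all add: det2_def adj2_def bas_def algebra_simps)
lemma adj_nz:
  assumes "M a b \<noteq> 0" shows "\<exists>i j. adj2 M j i \<noteq> 0"
proof -
  have "adj2 M I1 I1 = M I2 I2" "adj2 M I1 I2 = - M I1 I2" "adj2 M I2 I1 = - M I2 I1" "adj2 M I2 I2 = M I1 I1"
    by (simp_all add: adj2_def)
  then show ?thesis using assms by (cases a; cases b) (metis neg_equal_0_iff_equal)+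
qed
lemma lamv_0: "lamv (\<lambda>i. 0) = (\<lambda>i. 0)" by (rule ext, case_tac i) (simp_all add: lamv_def)

lemma S12a:
  assumes H: "HS U X P" and z1: "\<not> nz (X J1)" and z2: "\<not> nz (X J2)" and n3: "nz (X J3)"
    and u2: "U J2 = 0"
  shows "mk U X P v \<in> zcl Ts"
proof -
  have L: "LS U X P" and Q: "QS U X P" using H unfolding HS_def by simp_all
  note D = LS_D[OF L]
  have l1: "lamv (X J1) = (\<lambda>i. 0)" by (rule lamv_zero[OF z1])
  have x1: "X J1 = (\<lambda>i. 0)" by (rule zero_vec[OF z1])
  have x2: "X J2 = (\<lambda>i. 0)" by (rule zero_vec[OF z2])
  obtain s3 where s3: "X J3 s3 \<noteq> 0" using nz_ex[OF n3] by blast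
  have "U J3 * X J3 s3 = 0" using D(3)[of s3] l1 by (simp add: tri_zero1)
  then have u3: "U J3 = 0" using s3 by simp
  define B where "B a b = triP P (bas a) (bas b) (lamv (X J3))" for a b
  have Q3: "U J1 * U J2 + det2 B = 0" using QS_D(3)[OF Q] unfolding B_def by simp
  then have "det2 B = 0" using u2 by simp
  then obtain w where w: "nz w" "\<And>r. B r I1 * w I1 + B r I2 * w I2 = 0" using kernel by blast
  define y where "y = (\<lambda>i. case i of I1 \<Rightarrow> - w I2 | I2 \<Rightarrow> w I1)"
  have ly: "lamv y = w" by (rule ext, rename_tac i, case_tac i) (simp_all add: y_def lamv_def)
  have ny: "nz y" using w(1) by (auto simp: nz_def y_def)
  have K: "triP P (bas r) (lamv y) (lamv (X J3)) = 0" for r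
    using w(2)[of r] unfolding ly by (subst tri_lin2) (simp add: B_def mult.commute)
  define A where "A a c = triP P (bas a) (lamv y) (bas c)" for a c
  have dA: "det2 A = 0"
  proof (rule detzero[OF _ nz_lamv[OF n3]])
    fix r show "A r I1 * lamv (X J3) I1 + A r I2 * lamv (X J3) I2 = 0"
      using K[of r] tri_lin3[of P "bas r" "lamv y" "lamv (X J3)"] by (simp add: A_def algebra_simps)
  qed
  define X' where "X' t = X(J2 := (\<lambda>i. t * y i))" for t
  define \<gamma> where "\<gamma> t = mk U (X' t) P v" for t
  have "\<gamma> 0 \<in> zcl S1set"
  proof (rule curve_cl)
    have b: "upoly (\<lambda>t. X' t j i)" for j i by (cases j) (auto simp: X'_def)
    show "upoly (\<lambda>t. \<gamma> t w)" for w unfolding \<gamma>_def by (rule mk_upoly[OF _ b]) auto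
    show "\<gamma> t \<in> S1set" if t: "t \<noteq> 0" for t
    proof -
      have "LS U (X' t) P" unfolding LS_unf
      proof (intro conjI allI)
        fix r
        show "U J1 * X' t J1 r = triP P (bas r) (lamv (X' t J2)) (lamv (X' t J3))"
          using K[of r] x1 by (simp add: X'_def trisimps)
        show "U J2 * X' t J2 r = triP P (lamv (X' t J1)) (bas r) (lamv (X' t J3))"
          using u2 l1 by (simp add: X'_def trisimps)
        show "U J3 * X' t J3 r = triP P (lamv (X' t J1)) (lamv (X' t J2)) (bas r)"
          using u3 l1 by (simp add: X'_def trisimps)
      qed
      moreover have "QS U (X' t) P" unfolding QS_def
      proof (intro conjI)
        show "U J2 * U J3 + det2 (\<lambda>b c. triP P (lamv (X' t J1)) (bas b) (bas c)) = 0"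
          using u2 l1 by (simp add: X'_def trisimps det2_zero)
        show "U J3 * U J1 + det2 (\<lambda>a c. triP P (bas a) (lamv (X' t J2)) (bas c)) = 0"
          using u3 dA by (simp add: X'_def trisimps det2_smul A_def[symmetric])
        show "U J1 * U J2 + det2 (\<lambda>a b. triP P (bas a) (bas b) (lamv (X' t J3))) = 0"
          using QS_D(3)[OF Q] by (simp add: X'_def)
      qed
      ultimately have "HS U (X' t) P" unfolding HS_def by simp
      moreover have "\<not> nz (X' t J1)" "nz (X' t J2)" "nz (X' t J3)"
        using z1 ny n3 t by (auto simp: X'_def nz_def)
      ultimately show ?thesis unfolding S1set_def \<gamma>_def by blast
    qed
  qed
  moreover have "\<gamma> 0 = mk U X P v"
  proof -
    have "X' 0 = X" unfolding X'_def using x2 by (auto simp: fun_eq_iff)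
    then show ?thesis unfolding \<gamma>_def by simp
  qed
  ultimately show ?thesis using zcl_trans[OF _ S1set_sub] by simp
qed

lemma S12g_memI:
  assumes "HS U X P" "\<not> nz (X J1)" "\<not> nz (X J2)" "nz (X J3)" "U J1 \<noteq> 0" "U J2 \<noteq> 0"
  shows "mk U X P v \<in> S12g"
  using assms unfolding S12g_def by blast

lemma S12c1:
  assumes H: "HS U X P" and z1: "\<not> nz (X J1)" and z2: "\<not> nz (X J2)" and n3: "nz (X J3)"
    and u1: "U J1 = 0" and u2: "U J2 \<noteq> 0"
    and Bnz: "triP P (bas a0) (bas b0) (lamv (X J3)) \<noteq> 0"
  shows "mk U X P v \<in> zcl Ts"
proof -
  have L: "LS U X P" and Q: "QS U X P" using H unfolding HS_def by simp_all
  note D = LS_D[OF L]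
  have l1: "lamv (X J1) = (\<lambda>i. 0)" by (rule lamv_zero[OF z1])
  have l2: "lamv (X J2) = (\<lambda>i. 0)" by (rule lamv_zero[OF z2])
  have x1: "X J1 = (\<lambda>i. 0)" by (rule zero_vec[OF z1])
  have x2: "X J2 = (\<lambda>i. 0)" by (rule zero_vec[OF z2])
  obtain s3 where s3: "X J3 s3 \<noteq> 0" using nz_ex[OF n3] by blast
  have "U J3 * X J3 s3 = 0" using D(3)[of s3] l1 by (simp add: tri_zero1)
  then have u3: "U J3 = 0" using s3 by simp
  define B where "B a b = triP P (bas a) (bas b) (lamv (X J3))" for a b
  have Q3: "U J1 * U J2 + det2 B = 0" using QS_D(3)[OF Q] unfolding B_def by simp
  then have dB: "det2 B = 0" using u1 by simp
  obtain i j where ij: "adj2 B j i \<noteq> 0" using adj_nz[of B a0 b0] Bnz unfolding B_def by blast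
  obtain p3 where p3: "lamv (X J3) p3 \<noteq> 0" using nz_ex[OF nz_lamv[OF n3]] by blast
  define c1 where "c1 = - U J2 / (adj2 B j i * lamv (X J3) p3)"
  have c1: "c1 * lamv (X J3) p3 * adj2 B j i = - U J2" using ij p3 unfolding c1_def by simp
  define U' where "U' t = U(J1 := t)" for t
  define P' where "P' t = (\<lambda>a b c. P a b c + t * (c1 * (bas i a * bas j b * bas p3 c)))" for t
  define \<gamma> where "\<gamma> t = mk (U' t) X (P' t) v" for t
  have "\<gamma> 0 \<in> zcl S12g"
  proof (rule curve_cl)
    have a: "upoly (\<lambda>t. U' t k)" for k by (cases k) (auto simp: U'_def)
    have c: "upoly (\<lambda>t. P' t a b c)" for a b c unfolding P'_def by (intro upoly_add upoly_mult upoly_const upoly_id)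
    show "upoly (\<lambda>t. \<gamma> t w)" for w unfolding \<gamma>_def by (rule mk_upoly[OF a _ c]) auto
    show "\<gamma> t \<in> S12g" if t: "t \<noteq> 0" for t
      unfolding \<gamma>_def
    proof (rule S12g_memI)
      have Bt: "(\<lambda>a b. triP (P' t) (bas a) (bas b) (lamv (X J3))) = (\<lambda>a b. B a b + (t * c1 * lamv (X J3) p3) * (bas i a * bas j b))"
        by (intro ext) (simp only: P'_def tri_addP tri_smulP tri_rank B_def, simp add: bas_sym algebra_simps)
      have "LS (U' t) X (P' t)" unfolding LS_unf
      proof (intro conjI allI)
        fix r
        show "U' t J1 * X J1 r = triP (P' t) (bas r) (lamv (X J2)) (lamv (X J3))"
          using x1 l2 by (simp add: P'_def trisimps)
        show "U' t J2 * X J2 r = triP (P' t) (lamv (X J1)) (bas r) (lamv (X J3))"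
          using x2 l1 by (simp add: P'_def trisimps U'_def)
        show "U' t J3 * X J3 r = triP (P' t) (lamv (X J1)) (lamv (X J2)) (bas r)"
          using u3 l1 by (simp add: P'_def trisimps U'_def)
      qed
      moreover have "QS (U' t) X (P' t)" unfolding QS_def
      proof (intro conjI)
        show "U' t J2 * U' t J3 + det2 (\<lambda>b c. triP (P' t) (lamv (X J1)) (bas b) (bas c)) = 0"
          using u3 l1 by (simp add: U'_def P'_def trisimps det2_zero)
        show "U' t J3 * U' t J1 + det2 (\<lambda>a c. triP (P' t) (bas a) (lamv (X J2)) (bas c)) = 0"
          using u3 l2 by (simp add: U'_def P'_def trisimps det2_zero)
        show "U' t J1 * U' t J2 + det2 (\<lambda>a b. triP (P' t) (bas a) (bas b) (lamv (X J3))) = 0"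
          unfolding Bt det_rank1 using dB c1 by (simp add: U'_def, algebra)
      qed
      ultimately show "HS (U' t) X (P' t)" unfolding HS_def by simp
      show "\<not> nz (X J1)" "\<not> nz (X J2)" "nz (X J3)" by (fact z1 z2 n3)+
      show "U' t J1 \<noteq> 0" "U' t J2 \<noteq> 0" using t u2 by (simp_all add: U'_def)
    qed
  qed
  moreover have "\<gamma> 0 = mk U X P v"
  proof -
    have "U' 0 = U" unfolding U'_def using u1 by (auto simp: fun_eq_iff)
    moreover have "P' 0 = P" unfolding P'_def by simp
    ultimately show ?thesis unfolding \<gamma>_def by simp
  qed
  ultimately show ?thesis using zcl_trans[OF _ S12g_sub] by simp
qed

lemma S12c2:
  assumes H: "HS U X P" and z1: "\<not> nz (X J1)" and z2: "\<not> nz (X J2)" and n3: "nz (X J3)"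
    and u1: "U J1 = 0" and u2: "U J2 \<noteq> 0"
    and B0: "\<And>a b. triP P (bas a) (bas b) (lamv (X J3)) = 0"
  shows "mk U X P v \<in> zcl Ts"
proof -
  have L: "LS U X P" and Q: "QS U X P" using H unfolding HS_def by simp_all
  note D = LS_D[OF L]
  have l1: "lamv (X J1) = (\<lambda>i. 0)" by (rule lamv_zero[OF z1])
  have l2: "lamv (X J2) = (\<lambda>i. 0)" by (rule lamv_zero[OF z2])
  have x1: "X J1 = (\<lambda>i. 0)" by (rule zero_vec[OF z1])
  have x2: "X J2 = (\<lambda>i. 0)" by (rule zero_vec[OF z2])
  obtain s3 where s3: "X J3 s3 \<noteq> 0" using nz_ex[OF n3] by blast
  have "U J3 * X J3 s3 = 0" using D(3)[of s3] l1 by (simp add: tri_zero1)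
  then have u3: "U J3 = 0" using s3 by simp
  obtain p3 where p3: "lamv (X J3) p3 \<noteq> 0" using nz_ex[OF nz_lamv[OF n3]] by blast
  define c1 where "c1 = 1 / lamv (X J3) p3"
  have c1: "c1 * lamv (X J3) p3 = 1" using p3 unfolding c1_def by simp
  define U' where "U' t = U(J1 := t * t)" for t
  define P' where "P' t = (\<lambda>a b c. P a b c + t * (c1 * (bas I1 a * bas I1 b * bas p3 c))
        + t * ((- U J2 * c1) * (bas I2 a * bas I2 b * bas p3 c)))" for t
  define \<gamma> where "\<gamma> t = mk (U' t) X (P' t) v" for t
  have "\<gamma> 0 \<in> zcl S12g"
  proof (rule curve_cl)
    have a: "upoly (\<lambda>t. U' t k)" for k by (cases k) (auto simp: U'_def intro!: upoly_mult upoly_const upoly_id upoly_add)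
    have c: "upoly (\<lambda>t. P' t a b c)" for a b c unfolding P'_def by (intro upoly_add upoly_mult upoly_const upoly_id)
    show "upoly (\<lambda>t. \<gamma> t w)" for w unfolding \<gamma>_def by (rule mk_upoly[OF a _ c]) auto
    show "\<gamma> t \<in> S12g" if t: "t \<noteq> 0" for t
      unfolding \<gamma>_def
    proof (rule S12g_memI)
      have Bt: "triP (P' t) (bas a) (bas b) (lamv (X J3)) =
          t * (bas a I1 * bas b I1) - t * U J2 * (bas a I2 * bas b I2)" for a b
        using B0[of a b] c1 by (simp only: P'_def tri_addP tri_smulP tri_rank, algebra)
      have "LS (U' t) X (P' t)" unfolding LS_unf
      proof (intro conjI allI)
        fix r
        show "U' t J1 * X J1 r = triP (P' t) (bas r) (lamv (X J2)) (lamv (X J3))"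
          using x1 l2 by (simp add: P'_def trisimps)
        show "U' t J2 * X J2 r = triP (P' t) (lamv (X J1)) (bas r) (lamv (X J3))"
          using x2 l1 by (simp add: P'_def trisimps U'_def)
        show "U' t J3 * X J3 r = triP (P' t) (lamv (X J1)) (lamv (X J2)) (bas r)"
          using u3 l1 by (simp add: P'_def trisimps U'_def)
      qed
      moreover have "QS (U' t) X (P' t)" unfolding QS_def
      proof (intro conjI)
        show "U' t J2 * U' t J3 + det2 (\<lambda>b c. triP (P' t) (lamv (X J1)) (bas b) (bas c)) = 0"
          using u3 l1 by (simp add: U'_def P'_def trisimps det2_zero)
        show "U' t J3 * U' t J1 + det2 (\<lambda>a c. triP (P' t) (bas a) (lamv (X J2)) (bas c)) = 0"
          using u3 l2 by (simp add: U'_def P'_def trisimps det2_zero)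
        show "U' t J1 * U' t J2 + det2 (\<lambda>a b. triP (P' t) (bas a) (bas b) (lamv (X J3))) = 0"
          unfolding Bt by (simp add: U'_def det2_def bas_def algebra_simps)
      qed
      ultimately show "HS (U' t) X (P' t)" unfolding HS_def by simp
      show "\<not> nz (X J1)" "\<not> nz (X J2)" "nz (X J3)" by (fact z1 z2 n3)+
      show "U' t J1 \<noteq> 0" "U' t J2 \<noteq> 0" using t u2 by (simp_all add: U'_def)
    qed
  qed
  moreover have "\<gamma> 0 = mk U X P v"
  proof -
    have "U' 0 = U" unfolding U'_def using u1 by (auto simp: fun_eq_iff)
    moreover have "P' 0 = P" unfolding P'_def by simp
    ultimately show ?thesis unfolding \<gamma>_def by simp
  qed
  ultimately show ?thesis using zcl_trans[OF _ S12g_sub] by simp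
qed

lemma S12:
  assumes H: "HS U X P" and z1: "\<not> nz (X J1)" and z2: "\<not> nz (X J2)" and n3: "nz (X J3)"
  shows "mk U X P v \<in> zcl Ts"
proof (cases "U J2 = 0")
  case True
  then show ?thesis using S12a[OF H z1 z2 n3] by simp
next
  case u2: False
  show ?thesis
  proof (cases "U J1 = 0")
    case u1: True
    show ?thesis
    proof (cases "\<exists>a b. triP P (bas a) (bas b) (lamv (X J3)) \<noteq> 0")
      case True
      then obtain a0 b0 where "triP P (bas a0) (bas b0) (lamv (X J3)) \<noteq> 0" by blast
      then show ?thesis using S12c1[OF H z1 z2 n3 u1 u2] by simp
    next
      case False
      then show ?thesis using S12c2[OF H z1 z2 n3 u1 u2] by simp
    qed
  next
    case False
    then show ?thesis using S12gen[OF H z1 z2 n3 False u2] by simp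
  qed
qed

definition swp :: "idx3 \<Rightarrow> idx3" where
  "swp j = (case j of J1 \<Rightarrow> J1 | J2 \<Rightarrow> J3 | J3 \<Rightarrow> J2)"

lemma swp_simps[simp]: "swp J1 = J1" "swp J2 = J3" "swp J3 = J2" by (simp_all add: swp_def)

definition sw23 :: "(idx2 \<Rightarrow> idx2 \<Rightarrow> idx2 \<Rightarrow> complex) \<Rightarrow> idx2 \<Rightarrow> idx2 \<Rightarrow> idx2 \<Rightarrow> complex" where
  "sw23 P a b c = P a c b"

lemma sw23_sw23[simp]: "sw23 (sw23 P) = P"
  by (simp add: sw23_def fun_eq_iff)

lemma tri_swap23: "triP (sw23 P) x y z = triP P x z y"
  by (simp add: triP_def sw23_def algebra_simps)

lemma det2_transp: "det2 (\<lambda>a b. M b a) = det2 M"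
  by (simp add: det2_def algebra_simps)

lemma tau_HS:
  assumes "HS U X P"
  shows "HS (U \<circ> swp) (X \<circ> swp) (sw23 P)"
proof -
  have L: "LS U X P" and Q: "QS U X P" using assms unfolding HS_def by simp_all
  note D = LS_D[OF L] and QQ = QS_D[OF Q]
  have "LS (U \<circ> swp) (X \<circ> swp) (sw23 P)"
    unfolding LS_unf using D by (simp only: comp_def swp_simps tri_swap23) simp
  moreover have "QS (U \<circ> swp) (X \<circ> swp) (sw23 P)"
    unfolding QS_def
  proof (intro conjI)
    show "(U \<circ> swp) J2 * (U \<circ> swp) J3 + det2 (\<lambda>b c. triP (sw23 P) (lamv ((X \<circ> swp) J1)) (bas b) (bas c)) = 0"
      using QQ(1) det2_transp[of "\<lambda>b c. triP P (lamv (X J1)) (bas b) (bas c)"]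
      by (simp only: comp_def swp_simps tri_swap23 mult.commute[of "U J3"])
    show "(U \<circ> swp) J3 * (U \<circ> swp) J1 + det2 (\<lambda>a c. triP (sw23 P) (bas a) (lamv ((X \<circ> swp) J2)) (bas c)) = 0"
      using QQ(3) by (simp only: comp_def swp_simps tri_swap23 mult.commute[of "U J2"])
    show "(U \<circ> swp) J1 * (U \<circ> swp) J2 + det2 (\<lambda>a b. triP (sw23 P) (bas a) (bas b) (lamv ((X \<circ> swp) J3))) = 0"
      using QQ(2) by (simp only: comp_def swp_simps tri_swap23 mult.commute[of "U J1"])
  qed
  ultimately show ?thesis unfolding HS_def by simp
qed

definition tau :: "pt \<Rightarrow> pt" where
  "tau a = mk (Uof a \<circ> swp) (Xof a \<circ> swp) (sw23 (Pof a)) (a Vc)"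

lemma tau_mk: "tau (mk U X P v) = mk (U \<circ> swp) (X \<circ> swp) (sw23 P) v"
  by (simp add: tau_def)

lemma tau_tau: "tau (tau a) = a"
proof -
  have "swp (swp j) = j" for j by (cases j) simp_all
  then have "tau (tau a) = mk (Uof a) (Xof a) (Pof a) (a Vc)"
    by (simp add: tau_def comp_def)
  then show ?thesis by (simp add: mk_of)
qed

lemma tau_poly: "(\<lambda>x. tau x w) \<in> poly_fun"
  by (cases w) (simp_all add: tau_def Uof_def Xof_def Pof_def sw23_def poly_fun.intros)

lemma map_cl:
  assumes P: "\<And>w. (\<lambda>x. \<phi> x w) \<in> poly_fun" and b: "b \<in> zcl S"
  shows "\<phi> b \<in> zcl (\<phi> ` S)"
  unfolding zcl_def
proof (intro CollectI ballI impI)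
  fix f :: "pt \<Rightarrow> complex" assume f: "f \<in> poly_fun" and z: "\<forall>s\<in>\<phi> ` S. f s = 0"
  have g: "(\<lambda>x. \<phi> x w) \<in> gpoly" for w by (rule poly_fun_gpoly[OF P])
  have "(\<lambda>x. f (\<phi> x)) \<in> gpoly" by (rule gpoly_comp[OF poly_fun_gpoly[OF f] g])
  then have fp: "(\<lambda>x. f (\<phi> x)) \<in> poly_fun" by (rule gpoly_poly_fun)
  have zs: "\<forall>s\<in>S. f (\<phi> s) = 0" using z by simp
  have bb: "\<And>g. g \<in> poly_fun \<Longrightarrow> (\<forall>s\<in>S. g s = 0) \<Longrightarrow> g b = 0"
    using b unfolding zcl_def by simp
  show "f (\<phi> b) = 0" using bb[OF fp zs] by simp
qed

lemma tau_Ts: "tau ` Ts \<subseteq> Ts"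
proof
  fix b assume "b \<in> tau ` Ts"
  then obtain a where a: "a \<in> Ts" and b: "b = tau a" by blast
  have aG: "a \<in> Gs" and x: "a (Xc I2 J1) = 0" using a unfolding Ts_def by simp_all
  have He: "H_eqs a" and n: "nz (Xof a J1)" "nz (Xof a J2)" "nz (Xof a J3)"
    using aG unfolding Gs_def by simp_all
  have H: "HS (Uof a) (Xof a) (Pof a)" using He H_of by simp
  have "mk (Uof a \<circ> swp) (Xof a \<circ> swp) (sw23 (Pof a)) (a Vc) \<in> Ts"
    by (rule mk_Ts) (use tau_HS[OF H] n x in \<open>simp_all add: Xof_def\<close>)
  then show "b \<in> Ts" unfolding b tau_def .
qed

definition S12set :: "pt set" where
  "S12set = {mk U X P v | U X P v. HS U X P \<and> \<not> nz (X J1) \<and> \<not> nz (X J2) \<and> nz (X J3)}"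

lemma S12set_sub: "S12set \<subseteq> zcl Ts"
  unfolding S12set_def using S12 by blast

lemma S13:
  assumes H: "HS U X P" and z1: "\<not> nz (X J1)" and n2: "nz (X J2)" and z3: "\<not> nz (X J3)"
  shows "mk U X P v \<in> zcl Ts"
proof -
  have "tau (mk U X P v) \<in> zcl Ts"
    unfolding tau_mk by (rule S12) (use tau_HS[OF H] z1 n2 z3 in simp_all)
  then have "tau (tau (mk U X P v)) \<in> zcl (tau ` Ts)" by (rule map_cl[OF tau_poly])
  then have "mk U X P v \<in> zcl (tau ` Ts)" by (simp add: tau_tau)
  then show ?thesis using zcl_mono[OF tau_Ts] by blast
qed

definition S13set :: "pt set" where
  "S13set = {mk U X P v | U X P v. HS U X P \<and> \<not> nz (X J1) \<and> nz (X J2) \<and> \<not> nz (X J3)}"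

lemma S13set_sub: "S13set \<subseteq> zcl Ts"
  unfolding S13set_def using S13 by blast

lemma S123:
  assumes H: "HS U X P" and z1: "\<not> nz (X J1)" and z2: "\<not> nz (X J2)" and z3: "\<not> nz (X J3)"
  shows "mk U X P v \<in> zcl Ts"
proof -
  have L: "LS U X P" and Q: "QS U X P" using H unfolding HS_def by simp_all
  have l1: "lamv (X J1) = (\<lambda>i. 0)" by (rule lamv_zero[OF z1])
  have l2: "lamv (X J2) = (\<lambda>i. 0)" by (rule lamv_zero[OF z2])
  have l3: "lamv (X J3) = (\<lambda>i. 0)" by (rule lamv_zero[OF z3])
  have x1: "X J1 = (\<lambda>i. 0)" by (rule zero_vec[OF z1])
  have x2: "X J2 = (\<lambda>i. 0)" by (rule zero_vec[OF z2])
  have x3: "X J3 = (\<lambda>i. 0)" by (rule zero_vec[OF z3])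
  have q23: "U J2 * U J3 = 0" using QS_D(1)[OF Q] l1 by (simp add: tri_zero1 det2_zero)
  have q31: "U J3 * U J1 = 0" using QS_D(2)[OF Q] l2 by (simp add: tri_zero2 det2_zero)
  have q12: "U J1 * U J2 = 0" using QS_D(3)[OF Q] l3 by (simp add: tri_zero3 det2_zero)
  consider (a) "U J2 = 0" "U J3 = 0" | (b) "U J2 \<noteq> 0" | (c) "U J3 \<noteq> 0" by blast
  then show ?thesis
  proof cases
    case a
    obtain y2 where y2: "nz y2" and dA: "det2 (\<lambda>a c. triP P (bas a) (lamv y2) (bas c)) = 0"
      using quad2 by blast
    obtain w where w: "nz w" "\<And>r. triP P (bas r) (lamv y2) (bas I1) * w I1 + triP P (bas r) (lamv y2) (bas I2) * w I2 = 0"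
      using kernel[OF dA] by blast
    define y3 where "y3 = (\<lambda>i. case i of I1 \<Rightarrow> - w I2 | I2 \<Rightarrow> w I1)"
    have ly: "lamv y3 = w" by (rule ext, rename_tac i, case_tac i) (simp_all add: y3_def lamv_def)
    have ny3: "nz y3" using w(1) by (auto simp: nz_def y3_def)
    have K: "triP P (bas r) (lamv y2) (lamv y3) = 0" for r
      using w(2)[of r] unfolding ly by (subst tri_lin3) (simp add: mult.commute)
    have dA3: "det2 (\<lambda>a b. triP P (bas a) (bas b) (lamv y3)) = 0"
    proof (rule detzero[OF _ nz_lamv[OF y2]])
      fix r show "triP P (bas r) (bas I1) (lamv y3) * lamv y2 I1 + triP P (bas r) (bas I2) (lamv y3) * lamv y2 I2 = 0"
        using K[of r] tri_lin2[of P "bas r" "lamv y2" "lamv y3"] by (simp add: algebra_simps)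
    qed
    define X' where "X' t = X(J2 := (\<lambda>i. t * y2 i), J3 := (\<lambda>i. t * y3 i))" for t
    define \<gamma> where "\<gamma> t = mk U (X' t) P v" for t
    have "\<gamma> 0 \<in> zcl S1set"
    proof (rule curve_cl)
      have b: "upoly (\<lambda>t. X' t j i)" for j i by (cases j) (auto simp: X'_def)
      show "upoly (\<lambda>t. \<gamma> t w)" for w unfolding \<gamma>_def by (rule mk_upoly[OF _ b]) auto
      show "\<gamma> t \<in> S1set" if t: "t \<noteq> 0" for t
      proof -
        have "LS U (X' t) P" unfolding LS_unf
        proof (intro conjI allI)
          fix r
          show "U J1 * X' t J1 r = triP P (bas r) (lamv (X' t J2)) (lamv (X' t J3))"
            using K[of r] x1 by (simp add: X'_def trisimps)
          show "U J2 * X' t J2 r = triP P (lamv (X' t J1)) (bas r) (lamv (X' t J3))"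
            using a l1 by (simp add: X'_def trisimps)
          show "U J3 * X' t J3 r = triP P (lamv (X' t J1)) (lamv (X' t J2)) (bas r)"
            using a l1 by (simp add: X'_def trisimps)
        qed
        moreover have "QS U (X' t) P" unfolding QS_def
        proof (intro conjI)
          show "U J2 * U J3 + det2 (\<lambda>b c. triP P (lamv (X' t J1)) (bas b) (bas c)) = 0"
            using a l1 by (simp add: X'_def trisimps det2_zero)
          show "U J3 * U J1 + det2 (\<lambda>a c. triP P (bas a) (lamv (X' t J2)) (bas c)) = 0"
            using a dA by (simp add: X'_def trisimps det2_smul)
          show "U J1 * U J2 + det2 (\<lambda>a b. triP P (bas a) (bas b) (lamv (X' t J3))) = 0"
            using a dA3 by (simp add: X'_def trisimps det2_smul)
        qed
        ultimately have "HS U (X' t) P" unfolding HS_def by simp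
        moreover have "\<not> nz (X' t J1)" "nz (X' t J2)" "nz (X' t J3)"
          using z1 y2 ny3 t by (auto simp: X'_def nz_def)
        ultimately show ?thesis unfolding S1set_def \<gamma>_def by blast
      qed
    qed
    moreover have "\<gamma> 0 = mk U X P v"
    proof -
      have "X' 0 = X" unfolding X'_def using x2 x3 by (auto simp: fun_eq_iff)
      then show ?thesis unfolding \<gamma>_def by simp
    qed
    ultimately show ?thesis using zcl_trans[OF _ S1set_sub] by simp
  next
    case b
    then have u3: "U J3 = 0" and u1: "U J1 = 0" using q23 q12 by simp_all
    obtain y3 where y3: "nz y3" and dA: "det2 (\<lambda>a b. triP P (bas a) (bas b) (lamv y3)) = 0"
      using quad3 by blast
    define X' where "X' t = X(J3 := (\<lambda>i. t * y3 i))" for t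
    define \<gamma> where "\<gamma> t = mk U (X' t) P v" for t
    have "\<gamma> 0 \<in> zcl S12set"
    proof (rule curve_cl)
      have b: "upoly (\<lambda>t. X' t j i)" for j i by (cases j) (auto simp: X'_def)
      show "upoly (\<lambda>t. \<gamma> t w)" for w unfolding \<gamma>_def by (rule mk_upoly[OF _ b]) auto
      show "\<gamma> t \<in> S12set" if t: "t \<noteq> 0" for t
      proof -
        have "LS U (X' t) P" unfolding LS_unf
        proof (intro conjI allI)
          fix r
          show "U J1 * X' t J1 r = triP P (bas r) (lamv (X' t J2)) (lamv (X' t J3))"
            using x1 l2 by (simp add: X'_def trisimps)
          show "U J2 * X' t J2 r = triP P (lamv (X' t J1)) (bas r) (lamv (X' t J3))"
            using x2 l1 by (simp add: X'_def trisimps)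
          show "U J3 * X' t J3 r = triP P (lamv (X' t J1)) (lamv (X' t J2)) (bas r)"
            using u3 l1 by (simp add: X'_def trisimps)
        qed
        moreover have "QS U (X' t) P" unfolding QS_def
        proof (intro conjI)
          show "U J2 * U J3 + det2 (\<lambda>b c. triP P (lamv (X' t J1)) (bas b) (bas c)) = 0"
            using u3 l1 by (simp add: X'_def trisimps det2_zero)
          show "U J3 * U J1 + det2 (\<lambda>a c. triP P (bas a) (lamv (X' t J2)) (bas c)) = 0"
            using u3 l2 by (simp add: X'_def trisimps det2_zero)
          show "U J1 * U J2 + det2 (\<lambda>a b. triP P (bas a) (bas b) (lamv (X' t J3))) = 0"
            using u1 dA by (simp add: X'_def trisimps det2_smul)
        qed
        ultimately have "HS U (X' t) P" unfolding HS_def by simp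
        moreover have "\<not> nz (X' t J1)" "\<not> nz (X' t J2)" "nz (X' t J3)"
          using z1 z2 y3 t by (auto simp: X'_def nz_def)
        ultimately show ?thesis unfolding S12set_def \<gamma>_def by blast
      qed
    qed
    moreover have "\<gamma> 0 = mk U X P v"
    proof -
      have "X' 0 = X" unfolding X'_def using x3 by (auto simp: fun_eq_iff)
      then show ?thesis unfolding \<gamma>_def by simp
    qed
    ultimately show ?thesis using zcl_trans[OF _ S12set_sub] by simp
  next
    case c
    then have u2: "U J2 = 0" and u1: "U J1 = 0" using q23 q31 by simp_all
    obtain y2 where y2: "nz y2" and dA: "det2 (\<lambda>a c. triP P (bas a) (lamv y2) (bas c)) = 0"
      using quad2 by blast
    define X' where "X' t = X(J2 := (\<lambda>i. t * y2 i))" for t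
    define \<gamma> where "\<gamma> t = mk U (X' t) P v" for t
    have "\<gamma> 0 \<in> zcl S13set"
    proof (rule curve_cl)
      have b: "upoly (\<lambda>t. X' t j i)" for j i by (cases j) (auto simp: X'_def)
      show "upoly (\<lambda>t. \<gamma> t w)" for w unfolding \<gamma>_def by (rule mk_upoly[OF _ b]) auto
      show "\<gamma> t \<in> S13set" if t: "t \<noteq> 0" for t
      proof -
        have "LS U (X' t) P" unfolding LS_unf
        proof (intro conjI allI)
          fix r
          show "U J1 * X' t J1 r = triP P (bas r) (lamv (X' t J2)) (lamv (X' t J3))"
            using x1 l3 by (simp add: X'_def trisimps)
          show "U J2 * X' t J2 r = triP P (lamv (X' t J1)) (bas r) (lamv (X' t J3))"
            using u2 l1 by (simp add: X'_def trisimps)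
          show "U J3 * X' t J3 r = triP P (lamv (X' t J1)) (lamv (X' t J2)) (bas r)"
            using x3 l1 by (simp add: X'_def trisimps)
        qed
        moreover have "QS U (X' t) P" unfolding QS_def
        proof (intro conjI)
          show "U J2 * U J3 + det2 (\<lambda>b c. triP P (lamv (X' t J1)) (bas b) (bas c)) = 0"
            using u2 l1 by (simp add: X'_def trisimps det2_zero)
          show "U J3 * U J1 + det2 (\<lambda>a c. triP P (bas a) (lamv (X' t J2)) (bas c)) = 0"
            using u1 dA by (simp add: X'_def trisimps det2_smul)
          show "U J1 * U J2 + det2 (\<lambda>a b. triP P (bas a) (bas b) (lamv (X' t J3))) = 0"
            using u1 l3 by (simp add: X'_def trisimps det2_zero)
        qed
        ultimately have "HS U (X' t) P" unfolding HS_def by simp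
        moreover have "\<not> nz (X' t J1)" "nz (X' t J2)" "\<not> nz (X' t J3)"
          using z1 z3 y2 t by (auto simp: X'_def nz_def)
        ultimately show ?thesis unfolding S13set_def \<gamma>_def by blast
      qed
    qed
    moreover have "\<gamma> 0 = mk U X P v"
    proof -
      have "X' 0 = X" unfolding X'_def using x2 by (auto simp: fun_eq_iff)
      then show ?thesis unfolding \<gamma>_def by simp
    qed
    ultimately show ?thesis using zcl_trans[OF _ S13set_sub] by simp
  qed
qed

lemma Z2_sub:
  assumes H: "HS U X P" and z1: "\<not> nz (X J1)"
  shows "mk U X P v \<in> zcl Ts"
proof (cases "nz (X J2)")
  case n2: True
  show ?thesis
  proof (cases "nz (X J3)")
    case True then show ?thesis using S1[OF H z1 n2] by simp
  next
    case False then show ?thesis using S13[OF H z1 n2] by simp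
  qed
next
  case z2: False
  show ?thesis
  proof (cases "nz (X J3)")
    case True then show ?thesis using S12[OF H z1 z2] by simp
  next
    case False then show ?thesis using S123[OF H z1 z2] by simp
  qed
qed

definition prv :: "idx3 \<Rightarrow> idx3" where
  "prv j = (case j of J1 \<Rightarrow> J3 | J2 \<Rightarrow> J1 | J3 \<Rightarrow> J2)"
lemma prv_simps[simp]: "prv J1 = J3" "prv J2 = J1" "prv J3 = J2" by (simp_all add: prv_def)

definition rot :: "(idx2 \<Rightarrow> idx2 \<Rightarrow> idx2 \<Rightarrow> complex) \<Rightarrow> idx2 \<Rightarrow> idx2 \<Rightarrow> idx2 \<Rightarrow> complex" where
  "rot P a b c = P b c a"

lemma tri_rot: "triP (rot P) x y z = triP P y z x"
  by (simp add: triP_def rot_def algebra_simps)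

lemma sig_HS:
  assumes "HS U X P"
  shows "HS (U \<circ> prv) (X \<circ> prv) (rot P)"
proof -
  have L: "LS U X P" and Q: "QS U X P" using assms unfolding HS_def by simp_all
  note D = LS_D[OF L] and QQ = QS_D[OF Q]
  have "LS (U \<circ> prv) (X \<circ> prv) (rot P)"
    unfolding LS_unf using D by (simp only: comp_def prv_simps tri_rot) simp
  moreover have "QS (U \<circ> prv) (X \<circ> prv) (rot P)"
    unfolding QS_def
  proof (intro conjI)
    show "(U \<circ> prv) J2 * (U \<circ> prv) J3 + det2 (\<lambda>b c. triP (rot P) (lamv ((X \<circ> prv) J1)) (bas b) (bas c)) = 0"
      using QQ(3) by (simp only: comp_def prv_simps tri_rot)
    show "(U \<circ> prv) J3 * (U \<circ> prv) J1 + det2 (\<lambda>a c. triP (rot P) (bas a) (lamv ((X \<circ> prv) J2)) (bas c)) = 0"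
      using QQ(1) det2_transp[of "\<lambda>b c. triP P (lamv (X J1)) (bas b) (bas c)"]
      by (simp only: comp_def prv_simps tri_rot)
    show "(U \<circ> prv) J1 * (U \<circ> prv) J2 + det2 (\<lambda>a b. triP (rot P) (bas a) (bas b) (lamv ((X \<circ> prv) J3))) = 0"
      using QQ(2) det2_transp[of "\<lambda>a c. triP P (bas a) (lamv (X J2)) (bas c)"]
      by (simp only: comp_def prv_simps tri_rot)
  qed
  ultimately show ?thesis unfolding HS_def by simp
qed

definition sig :: "pt \<Rightarrow> pt" where
  "sig a = mk (Uof a \<circ> prv) (Xof a \<circ> prv) (rot (Pof a)) (a Vc)"

lemma sig_mk: "sig (mk U X P v) = mk (U \<circ> prv) (X \<circ> prv) (rot P) v"
  by (simp add: sig_def)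

lemma rot3[simp]: "rot (rot (rot P)) = P"
  by (simp add: rot_def fun_eq_iff)

lemma sig3: "sig (sig (sig a)) = a"
proof -
  have "prv (prv (prv j)) = j" for j by (cases j) simp_all
  then have "sig (sig (sig a)) = mk (Uof a) (Xof a) (Pof a) (a Vc)"
    by (simp add: sig_def comp_def)
  then show ?thesis by (simp add: mk_of)
qed

lemma sig_poly: "(\<lambda>x. sig x w) \<in> poly_fun"
  by (cases w) (simp_all add: sig_def Uof_def Xof_def Pof_def rot_def poly_fun.intros)

lemma sig_Gs: "sig ` Gs \<subseteq> Gs"
proof
  fix b assume "b \<in> sig ` Gs"
  then obtain a where a: "a \<in> Gs" and b: "b = sig a" by blast
  have He: "H_eqs a" and n: "nz (Xof a J1)" "nz (Xof a J2)" "nz (Xof a J3)"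
    using a unfolding Gs_def by simp_all
  have H: "HS (Uof a) (Xof a) (Pof a)" using He H_of by simp
  have "H_eqs (mk (Uof a \<circ> prv) (Xof a \<circ> prv) (rot (Pof a)) (a Vc))"
    unfolding H_mk by (rule sig_HS[OF H])
  moreover have "nz ((Xof a \<circ> prv) J1)" "nz ((Xof a \<circ> prv) J2)" "nz ((Xof a \<circ> prv) J3)"
    using n by simp_all
  ultimately show "b \<in> Gs" unfolding b sig_def Gs_def by simp
qed

lemma Ts_Gs: "Ts \<subseteq> Gs" unfolding Ts_def by auto

lemma x1_Gs:
  assumes "HS U X P" "\<not> nz (X J1)"
  shows "mk U X P v \<in> zcl Gs"
  using Z2_sub[OF assms] zcl_mono[OF Ts_Gs] by blast

lemma sig_cl:
  assumes "b \<in> zcl Gs" shows "sig b \<in> zcl Gs"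
proof -
  have "sig b \<in> zcl (sig ` Gs)" by (rule map_cl[of sig b Gs, OF sig_poly assms])
  then show ?thesis using zcl_mono[OF sig_Gs] by blast
qed

lemma H_cl:
  assumes He: "H_eqs a"
  shows "a \<in> zcl Gs"
proof -
  define U where "U = Uof a"
  define X where "X = Xof a"
  define P where "P = Pof a"
  have H: "HS U X P" using He H_of unfolding U_def X_def P_def by simp
  have a: "a = mk U X P (a Vc)" unfolding U_def X_def P_def by (simp add: mk_of)
  show ?thesis
  proof (cases "nz (X J1) \<and> nz (X J2) \<and> nz (X J3)")
    case True
    then have "a \<in> Gs" using He unfolding Gs_def X_def by simp
    then show ?thesis using zcl_sub by blast
  next
    case False
    then consider (1) "\<not> nz (X J1)" | (2) "\<not> nz (X J2)" | (3) "\<not> nz (X J3)" by blast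
    then show ?thesis
    proof cases
      case 1
      then show ?thesis using x1_Gs[OF H 1, of "a Vc"] a by simp
    next
      case 2
      have "sig (sig a) = mk ((U \<circ> prv) \<circ> prv) ((X \<circ> prv) \<circ> prv) (rot (rot P)) (a Vc)"
        by (subst a) (simp add: sig_mk)
      moreover have "mk ((U \<circ> prv) \<circ> prv) ((X \<circ> prv) \<circ> prv) (rot (rot P)) (a Vc) \<in> zcl Gs"
        by (rule x1_Gs) (use sig_HS[OF sig_HS[OF H]] 2 in simp_all)
      ultimately have "sig (sig a) \<in> zcl Gs" by simp
      then have "sig (sig (sig a)) \<in> zcl Gs" by (rule sig_cl)
      then show ?thesis by (simp add: sig3)
    next
      case 3
      have "sig a = mk (U \<circ> prv) (X \<circ> prv) (rot P) (a Vc)"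
        by (subst a) (simp add: sig_mk)
      moreover have "mk (U \<circ> prv) (X \<circ> prv) (rot P) (a Vc) \<in> zcl Gs"
        by (rule x1_Gs) (use sig_HS[OF H] 3 in simp_all)
      ultimately have "sig a \<in> zcl Gs" by simp
      then have "sig (sig a) \<in> zcl Gs" by (rule sig_cl)
      then have "sig (sig (sig a)) \<in> zcl Gs" by (rule sig_cl)
      then show ?thesis by (simp add: sig3)
    qed
  qed
qed

lemma range_Psi_H: "range Psi \<subseteq> coneH"
  unfolding coneH_def using Psi_H by auto

lemma range_PsiL_H: "range PsiL \<subseteq> coneH"
  unfolding coneH_def using PsiL_H by auto

lemma coneH_irr_eq: "coneH = zcl (range Psi)"
proof
  show "coneH \<subseteq> zcl (range Psi)"
  proof
    fix a assume "a \<in> coneH"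
    then have "a \<in> zcl Gs" using H_cl unfolding coneH_def by simp
    then show "a \<in> zcl (range Psi)" using zcl_mono[OF Gs_Psi] by blast
  qed
  show "zcl (range Psi) \<subseteq> coneH" by (rule zcl_min[OF coneH_closed range_Psi_H])
qed

lemma coneH_irred: "irred_closed coneH"
  unfolding coneH_irr_eq by (rule irred_image[OF Psi_poly])

lemma H_eqs_upd: "H_eqs (a(Vc := c)) \<longleftrightarrow> H_eqs a"
proof -
  have "Uof (a(Vc := c)) = Uof a" "Xof (a(Vc := c)) = Xof a" "Pof (a(Vc := c)) = Pof a"
    by (simp_all add: Uof_def Xof_def Pof_def fun_eq_iff)
  then show ?thesis by (simp only: H_of)
qed

definition z1 :: "prm \<Rightarrow> complex" where
  "z1 p = (case p of Gp j a b \<Rightarrow> bas a b | Qp a b c \<Rightarrow> 1 | Vp \<Rightarrow> 0)"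

lemma Psi_z1_u1: "Psi z1 (Uc J1) = 1"
  by (simp add: Psi_def z1_def dtz_def P0z_def bas_def)

lemma PsiL_x11: "PsiL (\<lambda>p. 1) (Xc I1 J1) = 1"
  by (simp add: PsiL_def Psi_def)

lemma Psi_x21: "Psi (\<lambda>p. 1) (Xc I2 J1) = 1"
  by (simp add: Psi_def)

lemma part1: "codim coneH (coneH \<inter> {a. a Vc = 0 \<and> a (Uc J1) = 0}) \<ge> 2"
proof (rule codim_ge2)
  fix Y assume Y: "irred_closed Y" and YZ: "Y \<subseteq> coneH \<inter> {a. a Vc = 0 \<and> a (Uc J1) = 0}"
  have v0: "\<And>y. y \<in> Y \<Longrightarrow> y Vc = 0" using YZ by auto
  have Yv: "irred_closed (vext Y)" by (rule vext_irred[OF Y]) (rule v0)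
  have sub1: "Y \<subseteq> vext Y"
  proof
    fix y assume y: "y \<in> Y"
    have "y(Vc := 0) = y" using v0[OF y] by auto
    then show "y \<in> vext Y" unfolding vext_def using y by simp
  qed
  obtain y where y: "y \<in> Y" using irredD(1)[OF Y] by auto
  have "y(Vc := 1) \<in> vext Y" unfolding vext_def using y v0[OF y]
    by (simp add: fun_upd_idem)
  moreover have "y(Vc := 1) \<notin> Y" using v0[of "y(Vc := 1)"] by auto
  ultimately have ne1: "Y \<noteq> vext Y" by blast
  have vH: "vext Y \<subseteq> coneH"
  proof
    fix a assume "a \<in> vext Y"
    then have "a(Vc := 0) \<in> Y" unfolding vext_def by simp
    then have "H_eqs (a(Vc := 0))" using YZ unfolding coneH_def by auto
    then show "a \<in> coneH" unfolding coneH_def by (simp add: H_eqs_upd)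
  qed
  have vU: "a (Uc J1) = 0" if "a \<in> vext Y" for a
  proof -
    have "a(Vc := 0) \<in> Y" using that unfolding vext_def by simp
    then have "(a(Vc := 0)) (Uc J1) = 0" using YZ by auto
    then show ?thesis by simp
  qed
  have "Psi z1 \<in> coneH" using range_Psi_H by auto
  moreover have "Psi z1 \<notin> vext Y" using vU[of "Psi z1"] Psi_z1_u1 by auto
  ultimately have ne2: "vext Y \<noteq> coneH" by blast
  show "\<exists>Y1 Y2. Y \<subset> Y1 \<and> Y1 \<subset> Y2 \<and> irred_closed Y1 \<and> irred_closed Y2 \<and> Y2 \<subseteq> coneH"
    using sub1 ne1 vH ne2 Yv coneH_irred by blast
qed

definition Ac :: "pt set" where "Ac = zcl (range PsiL)"

lemma Ac_irred: "irred_closed Ac"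
  unfolding Ac_def by (rule irred_image[OF PsiL_poly])

lemma Ac_H: "Ac \<subseteq> coneH"
  unfolding Ac_def by (rule zcl_min[OF coneH_closed range_PsiL_H])

lemma Ac_x21: "Ac \<subseteq> {a. a (Xc I2 J1) = 0}"
  unfolding Ac_def by (rule zcl_min[OF coord_closed]) (use PsiL_x21 in auto)

lemma Ts_Ac: "zcl Ts \<subseteq> Ac"
  unfolding Ac_def by (rule zcl_mono[OF Ts_PsiL])

lemma part2: "codim coneH (coneH \<inter> {a. a (Xc I1 J1) = 0 \<and> a (Xc I2 J1) = 0}) \<ge> 2"
proof (rule codim_ge2)
  fix Y assume Y: "irred_closed Y" and YZ: "Y \<subseteq> coneH \<inter> {a. a (Xc I1 J1) = 0 \<and> a (Xc I2 J1) = 0}"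
  have sub1: "Y \<subseteq> Ac"
  proof
    fix y assume y: "y \<in> Y"
    then have He: "H_eqs y" and x: "y (Xc I1 J1) = 0" "y (Xc I2 J1) = 0" using YZ unfolding coneH_def by auto
    have H: "HS (Uof y) (Xof y) (Pof y)" using He H_of by simp
    have z: "\<not> nz (Xof y J1)" using x by (simp add: nz_def Xof_def)
    have "mk (Uof y) (Xof y) (Pof y) (y Vc) \<in> zcl Ts" by (rule Z2_sub[OF H z])
    then show "y \<in> Ac" using Ts_Ac by (simp add: mk_of subset_iff)
  qed
  have "PsiL (\<lambda>p. 1) \<in> Ac" unfolding Ac_def using zcl_sub by blast
  moreover have "PsiL (\<lambda>p. 1) \<notin> Y" using YZ PsiL_x11 by auto
  ultimately have ne1: "Y \<noteq> Ac" by blast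
  have "Psi (\<lambda>p. 1) \<in> coneH" using range_Psi_H by auto
  moreover have "Psi (\<lambda>p. 1) \<notin> Ac" using Ac_x21 Psi_x21 by auto
  ultimately have ne2: "Ac \<noteq> coneH" by blast
  show "\<exists>Y1 Y2. Y \<subset> Y1 \<and> Y1 \<subset> Y2 \<and> irred_closed Y1 \<and> irred_closed Y2 \<and> Y2 \<subseteq> coneH"
    using sub1 ne1 Ac_H ne2 Ac_irred coneH_irred by blast
qed

theorem lemma5p2:
  shows "codim coneH (coneH \<inter> {a. a Vc = 0 \<and> a (Uc J1) = 0}) \<ge> 2
       \<and> codim coneH (coneH \<inter> {a. a (Xc I1 J1) = 0 \<and> a (Xc I2 J1) = 0}) \<ge> 2"
  using part1 part2 by simp


end
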